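(* Fix $\epsilon>0$, and let $k=k(n)$ satisfy $\frac kn<\min\left(\frac{\epsilon^2}4,\frac1{100}\right)$. Then \[\Pr\big(\exists v\in\mathcal L_k \text{ with } \Phi_{v,\tau_{k,\epsilon}}\ge\epsilon\big)=o\Big(\frac1n\Big),\] where $\tau_{k,\epsilon}=\frac{\epsilon}{4}\binom{n}{k+1}$.
   Context: Let $n\ge 1$ and $\mathcal B=\{0,1\}^n$ with the coordinatewise partial order; $\mathbf 0=(0,\dots,0)$, $\mathbf 1=(1,\dots,1)$, $|x|$ denotes the number of ones of $x$, and $\mathcal L_k=\{x\in\mathcal B:|x|=k\}$ is the $k$th level. A random decreasing walk from $\mathbf 1$ is a maximal chain $\mathbf 1=x_n>x_{n-1}>\dots>x_0=\mathbf 0$ with $x_i\in\mathcal L_i$, chosen uniformly among all $n!$ such chains (equivalently, each step turns a uniformly random remaining $1$ into $0$). The DLA process on $\mathcal B$: $C_0=\{\mathbf 0\}$; for $t\ge1$, let $\rho_t$ be a random decreasing walk from $\mathbf 1$, independent of everything before; let $v$ be the last vertex of the longest initial segment of $\rho_t$ that is disjoint from $C_{t-1}$, and set $C_t=C_{t-1}\cup\{v\}$. The process terminates at the first time $\tau_{\mathrm{end}}$ with $\mathbf 1\in C_{\tau_{\mathrm{end}}}$ (for $t>\tau_{\mathrm{end}}$ put $C_t=C_{\tau_{\mathrm{end}}}$). A vertex is occupied at time $t$ if it lies in $C_t$. For $v\in\mathcal B$ and time $t$, $\Phi_{v,t}$ is the fraction of monotone (saturated, decreasing) paths from $\mathbf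 1$ to $v$ that contain at least one vertex of $C_t$ other than $v$. Times are rounded to integers; asymptotics are as $n\to\infty$. *)

theory Defs
  imports "HOL-Probability.Probability" "HOL-Library.Landau_Symbols"
begin

text \<open>Vertices of the cube {0,1}^n are represented by the set of coordinates equal to 1,
  i.e. subsets of {0..<n}; |x| is card x, the level L_k is {x. x \<subseteq> {0..<n} \<and> card x = k},
  and \<one> = {0..<n}, \<zero> = {}.\<close>

definition cube_orders :: "nat \<Rightarrow> nat list set" where
  "cube_orders n = {\<sigma>. distinct \<sigma> \<and> set \<sigma> = {0..<n}}"

text \<open>A maximal decreasing chain from \<one> to \<zero>, encoded by the order \<sigma> in which the ones
  are turned into zeros: its vertices are x_n, x_{n-1}, ..., x_0.\<close>
definition walk_of :: "nat \<Rightarrow> nat list \<Rightarrow> nat set list" where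
  "walk_of n \<sigma> = map (\<lambda>j. {0..<n} - set (take j \<sigma>)) [0..<Suc n]"

definition random_walk :: "nat \<Rightarrow> nat set list pmf" where
  "random_walk n = map_pmf (walk_of n) (pmf_of_set (cube_orders n))"

definition dla_step :: "nat \<Rightarrow> nat set set \<Rightarrow> nat set set pmf" where
  "dla_step n C = (if {0..<n} \<in> C then return_pmf C
     else map_pmf (\<lambda>\<rho>. insert (last (takeWhile (\<lambda>x. x \<notin> C) \<rho>)) C) (random_walk n))"

fun dla :: "nat \<Rightarrow> nat \<Rightarrow> nat set set pmf" where
  "dla n 0 = return_pmf {{}}"
| "dla n (Suc t) = dla n t \<bind> dla_step n"

text \<open>Saturated decreasing paths from \<one> to v correspond to orders \<tau> of {0..<n} - v;
  vertices are {0..<n} - set (take j \<tau>) for j = 0..length \<tau> (the last being v).\<close>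
definition paths_to :: "nat \<Rightarrow> nat set \<Rightarrow> nat list set" where
  "paths_to n v = {\<tau>. distinct \<tau> \<and> set \<tau> = {0..<n} - v}"

definition Phi :: "nat \<Rightarrow> nat set set \<Rightarrow> nat set \<Rightarrow> real" where
  "Phi n C v = real (card {\<tau> \<in> paths_to n v. \<exists>j < length \<tau>. {0..<n} - set (take j \<tau>) \<in> C})
              / real (card (paths_to n v))"

definition level :: "nat \<Rightarrow> nat \<Rightarrow> nat set set" where
  "level n k = {x. x \<subseteq> {0..<n} \<and> card x = k}"

end

theory Submission
  imports Defs "HOL-Combinatorics.Multiset_Permutations"
begin


lemma cube_orders_eq: "cube_orders n = permutations_of_set {0..<n}"
  by (auto simp: cube_orders_def permutations_of_set_def)

lemma paths_to_eq: "paths_to n v = permutations_of_set ({0..<n} - v)"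
  by (auto simp: paths_to_def permutations_of_set_def)

lemma card_perm_prefix:
  assumes "finite A" "B \<subseteq> A"
  shows "card {\<tau> \<in> permutations_of_set A. set (take (card B) \<tau>) = B}
           = fact (card B) * fact (card A - card B)"
proof -
  let ?j = "card B"
  have fB: "finite B" using assms finite_subset by blast
  have eq: "{\<tau> \<in> permutations_of_set A. set (take ?j \<tau>) = B}
      = (\<lambda>(xs, ys). xs @ ys) ` (permutations_of_set B \<times> permutations_of_set (A - B))"
  proof (intro equalityI subsetI)
    fix \<tau> assume "\<tau> \<in> {\<tau> \<in> permutations_of_set A. set (take ?j \<tau>) = B}"
    hence t: "distinct \<tau>" "set \<tau> = A" "set (take ?j \<tau>) = B"
      by (auto simp: permutations_of_set_def)
    have "set (drop ?j \<tau>) = A - B"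
    proof -
      have "set \<tau> = set (take ?j \<tau>) \<union> set (drop ?j \<tau>)"
        by (metis set_append append_take_drop_id)
      moreover have "set (take ?j \<tau>) \<inter> set (drop ?j \<tau>) = {}"
        using t(1) by (metis append_take_drop_id distinct_append)
      ultimately show ?thesis using t by blast
    qed
    moreover have "distinct (take ?j \<tau>)" "distinct (drop ?j \<tau>)" using t(1) by auto
    ultimately have "(take ?j \<tau>, drop ?j \<tau>) \<in> permutations_of_set B \<times> permutations_of_set (A - B)"
      using t by (auto simp: permutations_of_set_def)
    thus "\<tau> \<in> (\<lambda>(xs, ys). xs @ ys) ` (permutations_of_set B \<times> permutations_of_set (A - B))"
      by (intro image_eqI[where x = "(take ?j \<tau>, drop ?j \<tau>)"]) auto
  next
    fix \<tau> assume "\<tau> \<in> (\<lambda>(xs, ys). xs @ ys) ` (permutations_of_set B \<times> permutations_of_set (A - B))"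
    then obtain xs ys where \<tau>: "\<tau> = xs @ ys" and xs: "set xs = B" "distinct xs"
      and ys: "set ys = A - B" "distinct ys" by (auto simp: permutations_of_set_def)
    have "length xs = ?j" using xs distinct_card by metis
    thus "\<tau> \<in> {\<tau> \<in> permutations_of_set A. set (take ?j \<tau>) = B}"
      using \<tau> xs ys assms by (auto simp: permutations_of_set_def)
  qed
  have inj: "inj_on (\<lambda>(xs, ys). xs @ ys) (permutations_of_set B \<times> permutations_of_set (A - B))"
  proof (rule inj_onI, clarsimp)
    fix xs ys xs' ys'
    assume "xs \<in> permutations_of_set B" "xs' \<in> permutations_of_set B" "xs @ ys = xs' @ ys'"
    moreover have "length xs = length xs'" using calculation
      by (metis permutations_of_setD distinct_card)
    ultimately show "xs = xs' \<and> ys = ys'" by auto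
  qed
  have "card {\<tau> \<in> permutations_of_set A. set (take ?j \<tau>) = B}
      = card (permutations_of_set B) * card (permutations_of_set (A - B))"
    unfolding eq by (subst card_image[OF inj]) (simp add: card_cartesian_product)
  also have "\<dots> = fact (card B) * fact (card A - card B)"
    using assms fB by (simp add: card_Diff_subset)
  finally show ?thesis .
qed

definition vert :: "nat \<Rightarrow> nat list \<Rightarrow> nat \<Rightarrow> nat set" where
  "vert n \<sigma> i = {0..<n} - set (take i \<sigma>)"

lemma vert_subset: "vert n \<sigma> i \<subseteq> {0..<n}" by (auto simp: vert_def)

lemma card_vert_perm:
  assumes A: "A \<subseteq> {0..<n}" and w: "w \<subseteq> {0..<n}" "{0..<n} - w \<subseteq> A"
  shows "card {\<tau> \<in> permutations_of_set A. vert n \<tau> (n - card w) = w}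
           = fact (n - card w) * fact (card A - (n - card w))"
proof -
  have fw: "finite w" using w finite_subset by blast
  have cB: "card ({0..<n} - w) = n - card w" using w fw by (simp add: card_Diff_subset)
  have "{\<tau> \<in> permutations_of_set A. vert n \<tau> (n - card w) = w}
      = {\<tau> \<in> permutations_of_set A. set (take (card ({0..<n} - w)) \<tau>) = {0..<n} - w}"
  proof (intro Collect_cong conj_cong refl)
    fix \<tau> assume "\<tau> \<in> permutations_of_set A"
    hence "set (take (n - card w) \<tau>) \<subseteq> {0..<n}" using A
      by (auto simp: permutations_of_set_def dest: in_set_takeD)
    thus "(vert n \<tau> (n - card w) = w) = (set (take (card ({0..<n} - w)) \<tau>) = {0..<n} - w)"
      unfolding vert_def cB using w by auto
  qed
  also have "card \<dots> = fact (n - card w) * fact (card A - (n - card w))"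
    using card_perm_prefix[of A "{0..<n} - w"] w A cB finite_subset[OF A] by auto
  finally show ?thesis .
qed

lemma card_cube_orders: "card (cube_orders n) = fact n"
  by (simp add: cube_orders_eq)

lemma walk_count:
  assumes "w \<subseteq> {0..<n}"
  shows "real (card {\<sigma> \<in> cube_orders n. vert n \<sigma> (n - card w) = w}) / real (card (cube_orders n))
         = 1 / real (n choose card w)"
proof -
  have cw: "card w \<le> n" using assms by (metis card_atLeastLessThan card_mono finite_atLeastLessThan diff_zero)
  have "card {\<sigma> \<in> cube_orders n. vert n \<sigma> (n - card w) = w} = fact (n - card w) * fact (card w)"
    unfolding cube_orders_eq using card_vert_perm[of "{0..<n}" n w] assms cw by simp
  moreover have "real (fact n) = fact (card w) * fact (n - card w) * real (n choose card w)"
    using binomial_fact_lemma[OF cw] by (metis of_nat_fact of_nat_mult)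
  ultimately show ?thesis unfolding card_cube_orders
    by (simp add: field_simps)
qed

lemma binom_ratio: "j < n \<Longrightarrow> (n choose Suc j) * Suc j = (n choose j) * (n - j)"
proof (cases n)
  case (Suc m)
  assume "j < n"
  have "Suc j * (Suc m choose Suc j) = Suc m * (m choose j)" by (rule Suc_times_binomial)
  moreover have "(Suc m - j) * (Suc m choose j) = Suc m * ((Suc m - 1) choose j)" by (rule binomial_absorb_comp)
  ultimately show ?thesis using Suc by (simp add: mult.commute)
qed simp



lemma cube_orders_fin: "finite (cube_orders n)" "cube_orders n \<noteq> {}"
  by (auto simp: cube_orders_eq intro!: finite_distinct_list exI[of _ "[0..<n]"] permutations_of_setI)

lemma orders_length: "\<sigma> \<in> cube_orders n \<Longrightarrow> length \<sigma> = n"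
  by (auto simp: cube_orders_def dest: distinct_card)

lemma walk_nth: "i \<le> n \<Longrightarrow> walk_of n \<sigma> ! i = vert n \<sigma> i"
  by (simp add: walk_of_def vert_def nth_map less_Suc_eq_le del: upt_Suc)

lemma walk_length: "length (walk_of n \<sigma>) = Suc n" by (simp add: walk_of_def)

lemma card_vert:
  assumes "\<sigma> \<in> cube_orders n" "i \<le> n"
  shows "card (vert n \<sigma> i) = n - i"
proof -
  have d: "distinct \<sigma>" "set \<sigma> = {0..<n}" using assms by (auto simp: cube_orders_def)
  have l: "length \<sigma> = n" using assms orders_length by blast
  have "set (take i \<sigma>) \<subseteq> {0..<n}" using d by (auto dest: in_set_takeD)
  moreover have "card (set (take i \<sigma>)) = i" using d l assms by (simp add: distinct_card)
  ultimately show ?thesis unfolding vert_def by (simp add: card_Diff_subset)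
qed

lemma vert_0: "vert n \<sigma> 0 = {0..<n}" by (simp add: vert_def)
lemma vert_n: "\<sigma> \<in> cube_orders n \<Longrightarrow> vert n \<sigma> n = {}"
  using orders_length[of \<sigma> n] by (auto simp: vert_def cube_orders_def)

definition dep :: "nat set set \<Rightarrow> nat set list \<Rightarrow> nat set" where
  "dep C \<rho> = last (takeWhile (\<lambda>x. x \<notin> C) \<rho>)"

lemma dep_prop:
  assumes \<sigma>: "\<sigma> \<in> cube_orders n" and C: "{} \<in> C" "{0..<n} \<notin> C"
  shows "\<exists>i<n. dep C (walk_of n \<sigma>) = vert n \<sigma> i \<and> vert n \<sigma> i \<notin> C \<and> vert n \<sigma> (Suc i) \<in> C"
proof -
  define \<rho> where "\<rho> = walk_of n \<sigma>"
  define P where "P = (\<lambda>x. x \<notin> C)"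
  define L where "L = length (takeWhile P \<rho>)"
  have \<rho>n: "\<rho> ! n = {}" unfolding \<rho>_def using walk_nth[of n n \<sigma>] vert_n[OF \<sigma>] by simp
  have \<rho>0: "\<rho> ! 0 = {0..<n}" unfolding \<rho>_def using walk_nth[of 0 n \<sigma>] vert_0 by simp
  have len: "length \<rho> = Suc n" unfolding \<rho>_def by (rule walk_length)
  have "L \<le> n"
  proof (rule ccontr)
    assume "\<not> L \<le> n"
    hence "n < L" by simp
    hence "takeWhile P \<rho> ! n = \<rho> ! n" unfolding L_def by (rule takeWhile_nth)
    moreover have "takeWhile P \<rho> ! n \<in> set (takeWhile P \<rho>)" using \<open>n < L\<close> L_def by simp
    ultimately have "P {}" using \<rho>n by (metis set_takeWhileD)
    thus False using C P_def by simp
  qed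
  hence Lless: "L < length \<rho>" using len by simp
  hence "\<not> P (\<rho> ! L)" unfolding L_def by (rule nth_length_takeWhile)
  have "L \<noteq> 0"
  proof
    assume "L = 0"
    hence "takeWhile P \<rho> = []" unfolding L_def by simp
    moreover have "\<rho> = \<rho> ! 0 # tl \<rho>" using len by (cases \<rho>) auto
    ultimately show False using \<rho>0 C P_def by (metis takeWhile.simps(2) list.distinct(1))
  qed
  define i where "i = L - 1"
  have iL: "Suc i = L" "i < n" using \<open>L \<noteq> 0\<close> \<open>L \<le> n\<close> unfolding i_def by auto
  have "dep C \<rho> = takeWhile P \<rho> ! i"
    unfolding dep_def P_def[symmetric] using \<open>L \<noteq> 0\<close> L_def i_def
    by (metis last_conv_nth length_0_conv)
  also have "\<dots> = \<rho> ! i" using iL L_def by (metis lessI takeWhile_nth)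
  finally have d: "dep C \<rho> = vert n \<sigma> i" using iL \<rho>_def walk_nth by simp
  have "vert n \<sigma> i \<notin> C"
  proof -
    have "takeWhile P \<rho> ! i \<in> set (takeWhile P \<rho>)" using iL L_def by (metis lessI nth_mem)
    hence "P (\<rho> ! i)" using iL L_def by (metis lessI set_takeWhileD takeWhile_nth)
    thus ?thesis using P_def \<rho>_def walk_nth iL by simp
  qed
  moreover have "vert n \<sigma> (Suc i) \<in> C"
    using \<open>\<not> P (\<rho> ! L)\<close> iL P_def \<rho>_def walk_nth by simp
  ultimately show ?thesis using d iL \<rho>_def by blast
qed

definition Inv :: "nat \<Rightarrow> nat set set \<Rightarrow> bool" where
  "Inv n C = ({} \<in> C \<and> (\<forall>w\<in>C. w \<subseteq> {0..<n}))"

lemma dla_step_eq: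
  "{0..<n} \<notin> C \<Longrightarrow> dla_step n C =
     map_pmf (\<lambda>\<sigma>. insert (dep C (walk_of n \<sigma>)) C) (pmf_of_set (cube_orders n))"
  by (simp add: dla_step_def random_walk_def map_pmf_comp dep_def)

lemma dep_sub: "\<sigma> \<in> cube_orders n \<Longrightarrow> Inv n C \<Longrightarrow> {0..<n} \<notin> C \<Longrightarrow> dep C (walk_of n \<sigma>) \<subseteq> {0..<n}"
  using dep_prop[of \<sigma> n C] vert_subset unfolding Inv_def by metis

lemma step_support:
  assumes "Inv n C" "C' \<in> set_pmf (dla_step n C)"
  shows "Inv n C' \<and> C \<subseteq> C'"
proof (cases "{0..<n} \<in> C")
  case True thus ?thesis using assms by (simp add: dla_step_def)
next
  case False
  then obtain \<sigma> where "\<sigma> \<in> cube_orders n" "C' = insert (dep C (walk_of n \<sigma>)) C"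
    using assms(2) cube_orders_fin by (auto simp: dla_step_eq)
  thus ?thesis using dep_sub[of \<sigma> n C] assms False by (auto simp: Inv_def)
qed

lemma dla_inv: "C \<in> set_pmf (dla n t) \<Longrightarrow> Inv n C"
proof (induction t arbitrary: C)
  case 0 thus ?case by (simp add: Inv_def)
next
  case (Suc t) thus ?case using step_support by auto
qed



definition Sv :: "nat \<Rightarrow> nat set \<Rightarrow> nat set set \<Rightarrow> real" where
  "Sv n v C = (\<Sum>w\<in>{w\<in>C. v \<subset> w \<and> w \<subseteq> {0..<n}}. 1 / real ((n - card v) choose (card w - card v)))"

lemma finite_above: "finite {w\<in>C. P w \<and> w \<subseteq> {0..<n::nat}}"
  by (rule finite_subset[of _ "Pow {0..<n}"]) (auto simp: finite_Pow_iff)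

lemma card_sub_n: "w \<subseteq> {0..<n} \<Longrightarrow> card w \<le> n"
  by (metis card_atLeastLessThan card_mono finite_atLeastLessThan diff_zero)

lemma Phi_le_S:
  assumes v: "v \<subseteq> {0..<n}"
  shows "Phi n C v \<le> Sv n v C"
proof -
  define k where "k = card v"
  define P where "P = permutations_of_set ({0..<n} - v)"
  define X where "X = {\<tau> \<in> paths_to n v. \<exists>j < length \<tau>. {0..<n} - set (take j \<tau>) \<in> C}"
  define W where "W = {w\<in>C. v \<subset> w \<and> w \<subseteq> {0..<n}}"
  define Aw where "Aw = (\<lambda>w. {\<tau> \<in> P. vert n \<tau> (n - card w) = w})"
  have fv: "finite v" using v finite_subset by blast
  have ck: "card ({0..<n} - v) = n - k" using v fv k_def by (simp add: card_Diff_subset)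
  have kn: "k \<le> n" using card_sub_n[OF v] k_def by simp
  have cP: "card P = fact (n - k)" using ck P_def by simp
  have fW: "finite W" unfolding W_def by (rule finite_above)
  have XU: "X \<subseteq> (\<Union>w\<in>W. Aw w)"
  proof
    fix \<tau> assume "\<tau> \<in> X"
    then obtain j where j: "j < length \<tau>" "vert n \<tau> j \<in> C" and \<tau>P: "\<tau> \<in> P"
      unfolding X_def P_def paths_to_eq vert_def by auto
    have d: "distinct \<tau>" "set \<tau> = {0..<n} - v" using \<tau>P P_def by (auto simp: permutations_of_set_def)
    have lt: "length \<tau> = n - k" using d ck distinct_card by metis
    have st: "set (take j \<tau>) \<subseteq> {0..<n} - v" using d by (auto dest: in_set_takeD)
    have cst: "card (set (take j \<tau>)) = j" using d j by (simp add: distinct_card)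
    define w where "w = vert n \<tau> j"
    have st': "set (take j \<tau>) \<subseteq> {0..<n}" using st by blast
    have cw: "card w = n - j" unfolding w_def vert_def using st' cst
      by (subst card_Diff_subset) (auto intro: finite_subset)
    have "v \<subseteq> w" unfolding w_def vert_def using st v by auto
    moreover have "v \<noteq> w" using cw j lt k_def by auto
    ultimately have "w \<in> W" unfolding W_def using j w_def vert_subset by auto
    moreover have "\<tau> \<in> Aw w" unfolding Aw_def using \<tau>P cw j lt w_def by simp
    ultimately show "\<tau> \<in> (\<Union>w\<in>W. Aw w)" by blast
  qed
  have fP: "finite P" unfolding P_def by simp
  have "card X \<le> card (\<Union>w\<in>W. Aw w)"
    by (rule card_mono[OF _ XU]) (auto simp: Aw_def fP fW)
  also have "\<dots> \<le> (\<Sum>w\<in>W. card (Aw w))" by (rule card_UN_le[OF fW])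
  finally have cX: "real (card X) \<le> (\<Sum>w\<in>W. real (card (Aw w)))" by (simp flip: of_nat_sum)
  have eachw: "real (card (Aw w)) / real (fact (n - k)) = 1 / real ((n - k) choose (card w - k))"
    if "w \<in> W" for w
  proof -
    have w: "v \<subseteq> w" "w \<subseteq> {0..<n}" "v \<noteq> w" using that W_def by auto
    have fw: "finite w" using w finite_subset by blast
    have kw: "k \<le> card w" using card_mono[OF fw w(1)] k_def by simp
    have wn: "card w \<le> n" using card_sub_n w by simp
    have "card (Aw w) = fact (n - card w) * fact (card ({0..<n} - v) - (n - card w))"
      unfolding Aw_def P_def by (rule card_vert_perm) (use w in auto)
    also have "card ({0..<n} - v) - (n - card w) = card w - k" using ck kw wn by simp
    finally have cA: "card (Aw w) = fact (n - card w) * fact (card w - k)" .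
    have le: "card w - k \<le> n - k" using wn by simp
    have "fact (card w - k) * fact (n - k - (card w - k)) * ((n - k) choose (card w - k)) = fact (n - k)"
      by (rule binomial_fact_lemma[OF le])
    moreover have "n - k - (card w - k) = n - card w" using kw wn by simp
    ultimately have "real (fact (n - k)) = real (fact (card w - k)) * real (fact (n - card w)) * real ((n - k) choose (card w - k))"
      by (metis of_nat_mult)
    thus ?thesis using cA by (simp add: field_simps)
  qed
  have "Phi n C v = real (card X) / real (card P)"
    unfolding Phi_def X_def P_def paths_to_eq by simp
  also have "\<dots> \<le> (\<Sum>w\<in>W. real (card (Aw w))) / real (fact (n - k))"
    using cX cP by (simp add: divide_right_mono)
  also have "\<dots> = (\<Sum>w\<in>W. real (card (Aw w)) / real (fact (n - k)))"
    by (simp add: sum_divide_distrib)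
  also have "\<dots> = Sv n v C" unfolding Sv_def W_def[symmetric] k_def[symmetric]
    using eachw by (intro sum.cong) auto
  finally show ?thesis .
qed

lemma Phi_le_1: "v \<subseteq> {0..<n} \<Longrightarrow> Phi n C v \<le> 1"
proof -
  assume v: "v \<subseteq> {0..<n}"
  have f: "finite (paths_to n v)" by (simp add: paths_to_eq)
  have ne: "paths_to n v \<noteq> {}" unfolding paths_to_eq
    by (metis finite_Diff finite_atLeastLessThan finite_distinct_list permutations_of_setI empty_iff)
  have "card {\<tau> \<in> paths_to n v. \<exists>j < length \<tau>. {0..<n} - set (take j \<tau>) \<in> C} \<le> card (paths_to n v)"
    by (rule card_mono[OF f]) auto
  moreover have "card (paths_to n v) > 0" using f ne by (simp add: card_gt_0_iff)
  ultimately show ?thesis unfolding Phi_def by simp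
qed



lemma nn_int_pmf_set_bound:
  assumes S: "finite S" "S \<noteq> {}" and f: "\<And>x. x \<in> S \<Longrightarrow> 0 \<le> f x"
    and g: "\<And>x. x \<in> S \<Longrightarrow> g x \<le> ennreal (f x)"
  shows "(\<integral>\<^sup>+x. g x \<partial>pmf_of_set S) \<le> ennreal ((\<Sum>x\<in>S. f x) / card S)"
proof -
  have "(\<integral>\<^sup>+x. g x \<partial>pmf_of_set S) \<le> (\<integral>\<^sup>+x. ennreal (f x) \<partial>pmf_of_set S)"
  proof (rule nn_integral_mono_AE, rule AE_pmfI)
    fix y assume "y \<in> set_pmf (pmf_of_set S)"
    hence "y \<in> S" using S by simp
    thus "g y \<le> ennreal (f y)" by (rule g)
  qed
  also have "\<dots> = (\<Sum>x\<in>S. ennreal (f x)) / card S" using S by (simp add: nn_integral_pmf_of_set)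
  also have "\<dots> = ennreal ((\<Sum>x\<in>S. f x) / card S)"
  proof -
    have "(\<Sum>x\<in>S. ennreal (f x)) = ennreal (\<Sum>x\<in>S. f x)" using f by (simp add: sum_ennreal)
    moreover have "(of_nat (card S) :: ennreal) = ennreal (real (card S))" by (simp add: ennreal_of_nat_eq_real_of_nat)
    moreover have "real (card S) > 0" using S by (simp add: card_gt_0_iff)
    moreover have "0 \<le> (\<Sum>x\<in>S. f x)" using f by (simp add: sum_nonneg)
    ultimately show ?thesis by (simp add: divide_ennreal)
  qed
  finally show ?thesis .
qed

lemma sum_ind_mult: "finite S \<Longrightarrow> (\<Sum>x\<in>S. of_bool (P x) * (c::real)) = c * card {x\<in>S. P x}"
proof -
  assume f: "finite S"
  have "(\<Sum>x\<in>S. of_bool (P x) * c) = (\<Sum>x\<in>S. of_bool (P x)) * c" by (rule sum_distrib_right[symmetric])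
  also have "(\<Sum>x\<in>S. of_bool (P x)) = (real (card (S \<inter> {x. P x})))" by (rule sum_of_bool_eq[OF f f])
  also have "S \<inter> {x. P x} = {x\<in>S. P x}" by blast
  finally show ?thesis by (simp only: mult.commute)
qed

definition Yf :: "nat \<Rightarrow> nat set \<Rightarrow> nat \<Rightarrow> real \<Rightarrow> nat set set \<Rightarrow> real" where
  "Yf n v h lam C = (if (\<forall>w\<in>C. card w < h) then exp (lam * Sv n v C) else 0)"

definition Wset :: "nat \<Rightarrow> nat set \<Rightarrow> nat \<Rightarrow> nat set set" where
  "Wset n v h = {w. v \<subset> w \<and> w \<subseteq> {0..<n} \<and> card w < h}"

definition aw :: "nat \<Rightarrow> nat set \<Rightarrow> real \<Rightarrow> nat set \<Rightarrow> real" where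
  "aw n v lam w = exp (lam / real ((n - card v) choose (card w - card v))) - 1"

lemma finite_Wset: "finite (Wset n v h)"
  by (rule finite_subset[of _ "Pow {0..<n}"]) (auto simp: Wset_def finite_Pow_iff)

lemma aw_nonneg: "0 \<le> lam \<Longrightarrow> 0 \<le> aw n v lam w"
  by (simp add: aw_def)

lemma Sv_insert:
  assumes "d \<notin> C" "d \<subseteq> {0..<n}"
  shows "Sv n v (insert d C) = Sv n v C + (if v \<subset> d then 1 / real ((n - card v) choose (card d - card v)) else 0)"
proof (cases "v \<subset> d")
  case True
  have "{w\<in>insert d C. v \<subset> w \<and> w \<subseteq> {0..<n}} = insert d {w\<in>C. v \<subset> w \<and> w \<subseteq> {0..<n}}"
    using True assms by auto
  thus ?thesis unfolding Sv_def using True assms finite_above[of C "\<lambda>w. v \<subset> w" n]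
    by (simp add: add.commute)
next
  case False
  have "{w\<in>insert d C. v \<subset> w \<and> w \<subseteq> {0..<n}} = {w\<in>C. v \<subset> w \<and> w \<subseteq> {0..<n}}"
    using False assms by auto
  thus ?thesis unfolding Sv_def using False by simp
qed

lemma step_Y:
  assumes inv: "Inv n C" and hn: "h \<le> n" and lam: "0 \<le> lam"
  shows "(\<integral>\<^sup>+C'. ennreal (Yf n v h lam C') \<partial>dla_step n C)
     \<le> ennreal (Yf n v h lam C * (1 + (\<Sum>w\<in>Wset n v h. aw n v lam w / real (n choose card w))))"
proof (cases "\<forall>w\<in>C. card w < h")
  case False
  have "(\<integral>\<^sup>+C'. ennreal (Yf n v h lam C') \<partial>dla_step n C) \<le> (\<integral>\<^sup>+C'. 0 \<partial>dla_step n C)"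
  proof (rule nn_integral_mono_AE, rule AE_pmfI)
    fix C' assume "C' \<in> set_pmf (dla_step n C)"
    hence "C \<subseteq> C'" using step_support[OF inv] by blast
    thus "ennreal (Yf n v h lam C') \<le> 0" using False by (auto simp: Yf_def)
  qed
  thus ?thesis by simp
next
  case True
  define S where "S = cube_orders n"
  define W where "W = Wset n v h"
  define E0 where "E0 = exp (lam * Sv n v C)"
  define G where "G = (\<lambda>\<sigma>. E0 * (1 + (\<Sum>w\<in>W. of_bool (vert n \<sigma> (n - card w) = w) * aw n v lam w)))"
  have YC: "Yf n v h lam C = E0" using True by (simp add: Yf_def E0_def)
  have notop: "{0..<n} \<notin> C" using True hn by fastforce
  have C0: "{} \<in> C" using inv Inv_def by blast
  have Gnn: "0 \<le> G \<sigma>" for \<sigma>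
    unfolding G_def E0_def using aw_nonneg[OF lam] by (intro mult_nonneg_nonneg add_nonneg_nonneg sum_nonneg) auto
  have pw: "ennreal (Yf n v h lam (insert (dep C (walk_of n \<sigma>)) C)) \<le> ennreal (G \<sigma>)" if \<sigma>: "\<sigma> \<in> S" for \<sigma>
  proof -
    obtain i where i: "i < n" "dep C (walk_of n \<sigma>) = vert n \<sigma> i" "vert n \<sigma> i \<notin> C"
      using dep_prop[of \<sigma> n C] \<sigma> S_def C0 notop by blast
    define d where "d = vert n \<sigma> i"
    have dsub: "d \<subseteq> {0..<n}" using vert_subset d_def by simp
    have cd: "card d = n - i" using card_vert \<sigma> S_def i d_def by simp
    show ?thesis
    proof (cases "card d < h")
      case False thus ?thesis using i Gnn d_def by (auto simp: Yf_def)
    next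
      case True
      have all: "\<forall>w\<in>insert d C. card w < h" using True \<open>\<forall>w\<in>C. card w < h\<close> by simp
      have "Yf n v h lam (insert d C) = exp (lam * Sv n v (insert d C))" using all by (simp add: Yf_def)
      also have "\<dots> \<le> G \<sigma>"
      proof (cases "v \<subset> d")
        case False
        hence "Sv n v (insert d C) = Sv n v C" using Sv_insert[OF i(3)[folded d_def] dsub] by simp
        moreover have "0 \<le> (\<Sum>w\<in>W. of_bool (vert n \<sigma> (n - card w) = w) * aw n v lam w)"
          using aw_nonneg[OF lam] by (intro sum_nonneg) auto
        ultimately show ?thesis unfolding G_def E0_def by simp
      next
        case vd: True
        have "d \<in> W" using vd dsub True by (simp add: W_def Wset_def)
        have ind: "vert n \<sigma> (n - card d) = d" using cd i d_def by simp
        have "aw n v lam d = of_bool (vert n \<sigma> (n - card d) = d) * aw n v lam d" using ind by simp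
        also have "\<dots> \<le> (\<Sum>w\<in>W. of_bool (vert n \<sigma> (n - card w) = w) * aw n v lam w)"
          by (rule member_le_sum[OF \<open>d \<in> W\<close>]) (use aw_nonneg[OF lam] finite_Wset W_def in auto)
        finally have le: "aw n v lam d \<le> \<dots>" .
        define b where "b = real ((n - card v) choose (card d - card v))"
        have "Sv n v (insert d C) = Sv n v C + 1 / b"
          using Sv_insert[OF i(3)[folded d_def] dsub] vd b_def by simp
        hence "exp (lam * Sv n v (insert d C)) = exp (lam * Sv n v C + lam / b)"
          by (simp add: distrib_left)
        also have "\<dots> = E0 * exp (lam / b)" unfolding E0_def by (rule exp_add)
        also have "exp (lam / b) = 1 + aw n v lam d" unfolding aw_def b_def by simp
        finally have "exp (lam * Sv n v (insert d C)) = E0 * (1 + aw n v lam d)" .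
        also have "\<dots> \<le> G \<sigma>" unfolding G_def using le by (simp add: E0_def)
        finally show ?thesis .
      qed
      finally show ?thesis using i d_def by (simp add: ennreal_leI)
    qed
  qed
  have fS: "finite S" "S \<noteq> {}" using cube_orders_fin S_def by auto
  have "(\<integral>\<^sup>+C'. ennreal (Yf n v h lam C') \<partial>dla_step n C)
      = (\<integral>\<^sup>+\<sigma>. ennreal (Yf n v h lam (insert (dep C (walk_of n \<sigma>)) C)) \<partial>pmf_of_set S)"
    using notop by (simp add: dla_step_eq S_def)
  also have "\<dots> \<le> ennreal ((\<Sum>\<sigma>\<in>S. G \<sigma>) / card S)"
    by (rule nn_int_pmf_set_bound[OF fS Gnn pw])
  also have "(\<Sum>\<sigma>\<in>S. G \<sigma>) / card S = E0 * (1 + (\<Sum>w\<in>W. aw n v lam w / real (n choose card w)))"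
  proof -
    have "(\<Sum>\<sigma>\<in>S. G \<sigma>) = E0 * (card S + (\<Sum>w\<in>W. \<Sum>\<sigma>\<in>S. of_bool (vert n \<sigma> (n - card w) = w) * aw n v lam w))"
    proof -
      have "(\<Sum>\<sigma>\<in>S. G \<sigma>) = (\<Sum>\<sigma>\<in>S. E0 * 1 + E0 * (\<Sum>w\<in>W. of_bool (vert n \<sigma> (n - card w) = w) * aw n v lam w))"
        unfolding G_def by (simp add: distrib_left)
      also have "\<dots> = E0 * card S + E0 * (\<Sum>\<sigma>\<in>S. \<Sum>w\<in>W. of_bool (vert n \<sigma> (n - card w) = w) * aw n v lam w)"
        by (simp add: sum.distrib sum_distrib_left)
      also have "(\<Sum>\<sigma>\<in>S. \<Sum>w\<in>W. of_bool (vert n \<sigma> (n - card w) = w) * aw n v lam w)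
          = (\<Sum>w\<in>W. \<Sum>\<sigma>\<in>S. of_bool (vert n \<sigma> (n - card w) = w) * aw n v lam w)"
        by (rule sum.swap)
      finally show ?thesis by (simp add: distrib_left)
    qed
    also have "(\<Sum>w\<in>W. \<Sum>\<sigma>\<in>S. of_bool (vert n \<sigma> (n - card w) = w) * aw n v lam w)
        = (\<Sum>w\<in>W. aw n v lam w * card {\<sigma>\<in>S. vert n \<sigma> (n - card w) = w})"
      by (rule sum.cong[OF refl], rule sum_ind_mult[OF fS(1)])
    finally have sumG: "(\<Sum>\<sigma>\<in>S. G \<sigma>) = E0 * (real (card S) + (\<Sum>w\<in>W. aw n v lam w * real (card {\<sigma>\<in>S. vert n \<sigma> (n - card w) = w})))" .
    have "(\<Sum>\<sigma>\<in>S. G \<sigma>) / card S = E0 * (1 + (\<Sum>w\<in>W. aw n v lam w * (card {\<sigma>\<in>S. vert n \<sigma> (n - card w) = w} / card S)))"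
    proof -
      have cS: "real (card S) > 0" using fS by (simp add: card_gt_0_iff)
      define X where "X = (\<Sum>w\<in>W. aw n v lam w * real (card {\<sigma>\<in>S. vert n \<sigma> (n - card w) = w}))"
      have 1: "E0 * (real (card S) + X) / real (card S) = E0 * (1 + X / real (card S))"
        using cS by (simp add: field_simps)
      have 2: "X / real (card S) = (\<Sum>w\<in>W. aw n v lam w * (real (card {\<sigma>\<in>S. vert n \<sigma> (n - card w) = w}) / real (card S)))"
        unfolding X_def sum_divide_distrib by (simp add: times_divide_eq_right)
      show ?thesis unfolding sumG X_def[symmetric] 1 2 ..
    qed
    also have "\<dots> = E0 * (1 + (\<Sum>w\<in>W. aw n v lam w / real (n choose card w)))"
    proof -
      have "aw n v lam w * (real (card {\<sigma>\<in>S. vert n \<sigma> (n - card w) = w}) / real (card S)) = aw n v lam w / real (n choose card w)"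
        if "w \<in> W" for w
      proof -
        have "w \<subseteq> {0..<n}" using that W_def Wset_def by auto
        from walk_count[OF this] show ?thesis unfolding S_def by simp
      qed
      hence "(\<Sum>w\<in>W. aw n v lam w * (real (card {\<sigma>\<in>S. vert n \<sigma> (n - card w) = w}) / real (card S)))
           = (\<Sum>w\<in>W. aw n v lam w / real (n choose card w))" by (rule sum.cong[OF refl])
      thus ?thesis by (simp only:)
    qed
    finally show ?thesis .
  qed
  finally show ?thesis using YC W_def by simp
qed



lemma Y_iter:
  fixes v :: "nat set" and t :: nat
  assumes hn: "h \<le> n" and h0: "0 < h" and lam: "0 \<le> lam"
  defines "Q \<equiv> 1 + (\<Sum>w\<in>Wset n v h. aw n v lam w / real (n choose card w))"
  shows "(\<integral>\<^sup>+C. ennreal (Yf n v h lam C) \<partial>dla n t) \<le> ennreal (Q ^ t)"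
proof (induction t)
  case 0
  have "{w\<in>{{}}. v \<subset> w \<and> w \<subseteq> {0..<n}} = {}" by auto
  hence "Yf n v h lam {{}} = 1" using h0 by (simp add: Yf_def Sv_def)
  thus ?case by simp
next
  case (Suc t)
  have Q0: "0 \<le> Q" unfolding Q_def using aw_nonneg[OF lam] by (intro add_nonneg_nonneg sum_nonneg) auto
  have Ynn: "0 \<le> Yf n v h lam C" for C by (simp add: Yf_def)
  have "(\<integral>\<^sup>+C. ennreal (Yf n v h lam C) \<partial>dla n (Suc t))
      = (\<integral>\<^sup>+C. (\<integral>\<^sup>+C'. ennreal (Yf n v h lam C') \<partial>dla_step n C) \<partial>dla n t)" by simp
  also have "\<dots> \<le> (\<integral>\<^sup>+C. ennreal (Yf n v h lam C) * ennreal Q \<partial>dla n t)"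
  proof (rule nn_integral_mono_AE, rule AE_pmfI)
    fix C assume "C \<in> set_pmf (dla n t)"
    hence "Inv n C" by (rule dla_inv)
    from step_Y[OF this hn lam, of v] show "(\<integral>\<^sup>+C'. ennreal (Yf n v h lam C') \<partial>dla_step n C) \<le> ennreal (Yf n v h lam C) * ennreal Q"
      using Ynn Q0 by (simp add: ennreal_mult Q_def)
  qed
  also have "\<dots> = (\<integral>\<^sup>+C. ennreal (Yf n v h lam C) \<partial>dla n t) * ennreal Q"
    by (rule nn_integral_multc) simp
  also have "\<dots> \<le> ennreal (Q ^ t) * ennreal Q" using Suc by (intro mult_right_mono) auto
  also have "\<dots> = ennreal (Q ^ Suc t)" using Q0 by (simp add: ennreal_mult[symmetric] mult.commute)
  finally show ?case .
qed

lemma Y_markov: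
  fixes v :: "nat set" and t :: nat
  assumes hn: "h \<le> n" and h0: "0 < h" and lam: "0 \<le> lam"
  defines "Q \<equiv> 1 + (\<Sum>w\<in>Wset n v h. aw n v lam w / real (n choose card w))"
  shows "measure_pmf.prob (dla n t) {C. eps \<le> Sv n v C \<and> (\<forall>w\<in>C. card w < h)} \<le> Q ^ t / exp (lam * eps)"
proof -
  let ?A = "{C. eps \<le> Sv n v C \<and> (\<forall>w\<in>C. card w < h)}"
  have Q0: "0 \<le> Q" unfolding Q_def using aw_nonneg[OF lam] by (intro add_nonneg_nonneg sum_nonneg) auto
  have "emeasure (dla n t) ?A = (\<integral>\<^sup>+C. indicator ?A C \<partial>dla n t)" by simp
  also have "\<dots> \<le> (\<integral>\<^sup>+C. ennreal (Yf n v h lam C) * ennreal (1 / exp (lam * eps)) \<partial>dla n t)"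
  proof (rule nn_integral_mono)
    fix C
    show "indicator ?A C \<le> ennreal (Yf n v h lam C) * ennreal (1 / exp (lam * eps))"
    proof (cases "C \<in> ?A")
      case True
      hence "exp (lam * eps) \<le> Yf n v h lam C" using lam by (simp add: Yf_def mult_left_mono)
      hence "1 \<le> Yf n v h lam C * (1 / exp (lam * eps))" by (simp add: field_simps)
      thus ?thesis using True by (simp add: ennreal_mult[symmetric] Yf_def)
    qed simp
  qed
  also have "\<dots> = (\<integral>\<^sup>+C. ennreal (Yf n v h lam C) \<partial>dla n t) * ennreal (1 / exp (lam * eps))"
    by (rule nn_integral_multc) simp
  also have "\<dots> \<le> ennreal (Q ^ t) * ennreal (1 / exp (lam * eps))"
    using Y_iter[OF hn h0 lam, where v=v and t=t] unfolding Q_def by (intro mult_right_mono) auto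
  also have "\<dots> = ennreal (Q ^ t / exp (lam * eps))" using Q0 by (simp add: ennreal_mult[symmetric])
  finally have "ennreal (measure_pmf.prob (dla n t) ?A) \<le> ennreal (Q ^ t / exp (lam * eps))"
    by (simp add: measure_pmf.emeasure_eq_measure)
  thus ?thesis using Q0 by (simp add: ennreal_le_iff divide_nonneg_pos)
qed

definition cnt :: "nat \<Rightarrow> nat set set \<Rightarrow> real" where
  "cnt j C = real (card {w\<in>C. card w = j})"

definition Hgt :: "nat \<Rightarrow> nat set set \<Rightarrow> bool" where
  "Hgt h C = (\<exists>w\<in>C. h \<le> card w)"

lemma cnt_nonneg: "0 \<le> cnt j C" by (simp add: cnt_def)

lemma dep_child:
  assumes \<sigma>: "\<sigma> \<in> cube_orders n" and inv: "Inv n C" and notop: "{0..<n} \<notin> C"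
  defines "d \<equiv> dep C (walk_of n \<sigma>)"
  shows "d \<notin> C \<and> d \<subseteq> {0..<n} \<and> 1 \<le> card d \<and>
         (\<exists>u\<in>C. card u = card d - 1 \<and> vert n \<sigma> (n - card u) = u)"
proof -
  have C0: "{} \<in> C" using inv Inv_def by blast
  obtain i where i: "i < n" "d = vert n \<sigma> i" "vert n \<sigma> i \<notin> C" "vert n \<sigma> (Suc i) \<in> C"
    using dep_prop[OF \<sigma> C0 notop] d_def by blast
  have cd: "card d = n - i" using card_vert[OF \<sigma>] i by simp
  have cu: "card (vert n \<sigma> (Suc i)) = n - Suc i" using card_vert[OF \<sigma>] i by simp
  show ?thesis using i cd cu vert_subset[of n \<sigma> i]
    by (intro conjI bexI[of _ "vert n \<sigma> (Suc i)"]) auto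
qed

lemma exp_sumind:
  assumes inv: "Inv n C"
  shows "(\<Sum>\<sigma>\<in>cube_orders n. \<Sum>u\<in>{u\<in>C. card u = j}. of_bool (vert n \<sigma> (n - card u) = u)) / real (card (cube_orders n))
         = cnt j C / real (n choose j)"
proof -
  let ?S = "cube_orders n" and ?U = "{u\<in>C. card u = j}"
  have fS: "finite ?S" "?S \<noteq> {}" using cube_orders_fin by auto
  have fU: "finite ?U"
  proof (rule finite_subset[of _ "Pow {0..<n}"])
    show "?U \<subseteq> Pow {0..<n}" using inv unfolding Inv_def by auto
  qed simp
  have "(\<Sum>\<sigma>\<in>?S. \<Sum>u\<in>?U. of_bool (vert n \<sigma> (n - card u) = u)) = (\<Sum>u\<in>?U. \<Sum>\<sigma>\<in>?S. (of_bool (vert n \<sigma> (n - card u) = u) :: real))"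
    by (rule sum.swap)
  also have "\<dots> = (\<Sum>u\<in>?U. real (card {\<sigma>\<in>?S. vert n \<sigma> (n - card u) = u}))"
    using sum_ind_mult[OF fS(1), where c=1] by simp
  finally have "(\<Sum>\<sigma>\<in>?S. \<Sum>u\<in>?U. of_bool (vert n \<sigma> (n - card u) = u)) / real (card ?S)
       = (\<Sum>u\<in>?U. real (card {\<sigma>\<in>?S. vert n \<sigma> (n - card u) = u}) / real (card ?S))"
    by (simp add: sum_divide_distrib)
  also have "\<dots> = (\<Sum>u\<in>?U. 1 / real (n choose j))"
  proof (rule sum.cong[OF refl])
    fix u assume "u \<in> ?U"
    hence "u \<subseteq> {0..<n}" "card u = j" using inv Inv_def by auto
    thus "real (card {\<sigma>\<in>?S. vert n \<sigma> (n - card u) = u}) / real (card ?S) = 1 / real (n choose j)"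
      using walk_count[of u n] by simp
  qed
  also have "\<dots> = cnt j C / real (n choose j)" by (simp add: cnt_def)
  finally show ?thesis .
qed



lemma finite_C: "Inv n C \<Longrightarrow> finite C"
  by (rule finite_subset[of _ "Pow {0..<n}"]) (auto simp: Inv_def)

lemma integ_bound:
  assumes inv: "Inv n C" and notop: "{0..<n} \<notin> C" and c0: "0 \<le> c0"
    and pw: "\<And>\<sigma>. \<sigma> \<in> cube_orders n \<Longrightarrow> F (insert (dep C (walk_of n \<sigma>)) C)
              \<le> c0 + (\<Sum>u\<in>{u\<in>C. card u = j}. of_bool (vert n \<sigma> (n - card u) = u))"
  shows "(\<integral>\<^sup>+C'. ennreal (F C') \<partial>dla_step n C) \<le> ennreal (c0 + cnt j C / real (n choose j))"
proof -
  let ?S = "cube_orders n" and ?U = "{u\<in>C. card u = j}"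
  define f where "f = (\<lambda>\<sigma>. c0 + (\<Sum>u\<in>?U. (of_bool (vert n \<sigma> (n - card u) = u) :: real)))"
  have fS: "finite ?S" "?S \<noteq> {}" using cube_orders_fin by auto
  have fnn: "0 \<le> f \<sigma>" for \<sigma> unfolding f_def using c0 by (intro add_nonneg_nonneg sum_nonneg) auto
  have "(\<integral>\<^sup>+C'. ennreal (F C') \<partial>dla_step n C)
      = (\<integral>\<^sup>+\<sigma>. ennreal (F (insert (dep C (walk_of n \<sigma>)) C)) \<partial>pmf_of_set ?S)"
    using notop by (simp add: dla_step_eq)
  also have "\<dots> \<le> ennreal ((\<Sum>\<sigma>\<in>?S. f \<sigma>) / card ?S)"
    by (rule nn_int_pmf_set_bound[OF fS fnn]) (use pw f_def in \<open>auto intro: ennreal_leI\<close>)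
  also have "(\<Sum>\<sigma>\<in>?S. f \<sigma>) / card ?S = c0 + (\<Sum>\<sigma>\<in>?S. \<Sum>u\<in>?U. (of_bool (vert n \<sigma> (n - card u) = u) :: real)) / card ?S"
  proof -
    have cS: "real (card ?S) > 0" using fS by (simp add: card_gt_0_iff)
    have "(\<Sum>\<sigma>\<in>?S. f \<sigma>) = real (card ?S) * c0 + (\<Sum>\<sigma>\<in>?S. \<Sum>u\<in>?U. (of_bool (vert n \<sigma> (n - card u) = u) :: real))"
      unfolding f_def by (simp add: sum.distrib)
    thus ?thesis using cS by (simp add: add_divide_distrib)
  qed
  also have "\<dots> = c0 + cnt j C / real (n choose j)" using exp_sumind[OF inv, of j] by simp
  finally show ?thesis .
qed

lemma step_cnt:
  assumes inv: "Inv n C" and j: "1 \<le> j"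
  shows "(\<integral>\<^sup>+C'. ennreal (cnt j C') \<partial>dla_step n C) \<le> ennreal (cnt j C + cnt (j - 1) C / real (n choose (j - 1)))"
proof (cases "{0..<n} \<in> C")
  case True
  thus ?thesis by (simp add: dla_step_def cnt_nonneg ennreal_leI)
next
  case False
  show ?thesis
  proof (rule integ_bound[OF inv False cnt_nonneg])
    fix \<sigma> assume \<sigma>: "\<sigma> \<in> cube_orders n"
    define d where "d = dep C (walk_of n \<sigma>)"
    have dc: "d \<notin> C" "d \<subseteq> {0..<n}" "1 \<le> card d" and
      u: "\<exists>u\<in>C. card u = card d - 1 \<and> vert n \<sigma> (n - card u) = u"
      using dep_child[OF \<sigma> inv False] d_def by auto
    have fC: "finite C" using finite_C[OF inv] .
    have "cnt j (insert d C) = cnt j C + of_bool (card d = j)"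
    proof (cases "card d = j")
      case True
      have "{w\<in>insert d C. card w = j} = insert d {w\<in>C. card w = j}" using True by auto
      thus ?thesis using dc fC True by (simp add: cnt_def)
    next
      case False
      have "{w\<in>insert d C. card w = j} = {w\<in>C. card w = j}" using False by auto
      thus ?thesis using False by (simp add: cnt_def)
    qed
    also have "of_bool (card d = j) \<le> (\<Sum>u\<in>{u\<in>C. card u = j - 1}. (of_bool (vert n \<sigma> (n - card u) = u) :: real))"
    proof (cases "card d = j")
      case True
      then obtain u where "u \<in> C" "card u = j - 1" "vert n \<sigma> (n - card u) = u" using u by auto
      hence "(1::real) = of_bool (vert n \<sigma> (n - card u) = u)" by simp
      also have "\<dots> \<le> (\<Sum>u\<in>{u\<in>C. card u = j - 1}. (of_bool (vert n \<sigma> (n - card u) = u) :: real))"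
        by (rule member_le_sum) (use \<open>u \<in> C\<close> \<open>card u = j - 1\<close> fC in auto)
      finally show ?thesis using True by simp
    qed (simp add: sum_nonneg)
    finally show "cnt j (insert (dep C (walk_of n \<sigma>)) C) \<le> cnt j C + (\<Sum>u\<in>{u\<in>C. card u = j - 1}. of_bool (vert n \<sigma> (n - card u) = u))"
      using d_def by simp
  qed
qed

lemma step_hgt:
  assumes inv: "Inv n C" and h: "1 \<le> h"
  shows "(\<integral>\<^sup>+C'. ennreal (of_bool (Hgt h C')) \<partial>dla_step n C)
     \<le> ennreal (of_bool (Hgt h C) + cnt (h - 1) C / real (n choose (h - 1)))"
proof (cases "{0..<n} \<in> C")
  case True
  thus ?thesis by (simp add: dla_step_def cnt_nonneg ennreal_leI)
next
  case False
  show ?thesis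
  proof (rule integ_bound[OF inv False])
    show "0 \<le> (of_bool (Hgt h C) :: real)" by simp
    fix \<sigma> assume \<sigma>: "\<sigma> \<in> cube_orders n"
    define d where "d = dep C (walk_of n \<sigma>)"
    have dc: "d \<notin> C" "d \<subseteq> {0..<n}" "1 \<le> card d" and
      u: "\<exists>u\<in>C. card u = card d - 1 \<and> vert n \<sigma> (n - card u) = u"
      using dep_child[OF \<sigma> inv False] d_def by auto
    have fC: "finite C" using finite_C[OF inv] .
    have nn: "0 \<le> (\<Sum>u\<in>{u\<in>C. card u = h - 1}. (of_bool (vert n \<sigma> (n - card u) = u) :: real))"
      by (simp add: sum_nonneg)
    have "(of_bool (Hgt h (insert d C)) :: real) \<le> of_bool (Hgt h C) + (\<Sum>u\<in>{u\<in>C. card u = h - 1}. of_bool (vert n \<sigma> (n - card u) = u))"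
    proof (cases "Hgt h C")
      case True thus ?thesis using nn by simp
    next
      case nH: False
      show ?thesis
      proof (cases "h \<le> card d")
        case False
        hence "\<not> Hgt h (insert d C)" using nH by (auto simp: Hgt_def)
        thus ?thesis using nn by simp
      next
        case True
        obtain u where u: "u \<in> C" "card u = card d - 1" "vert n \<sigma> (n - card u) = u" using \<open>\<exists>u\<in>C. _\<close> by blast
        have "card u < h" using nH u by (auto simp: Hgt_def)
        hence "card u = h - 1" using u True dc by linarith
        hence "(1::real) = of_bool (vert n \<sigma> (n - card u) = u)" using u by simp
        also have "\<dots> \<le> (\<Sum>u\<in>{u\<in>C. card u = h - 1}. (of_bool (vert n \<sigma> (n - card u) = u) :: real))"
          by (rule member_le_sum) (use \<open>u \<in> C\<close> \<open>card u = h - 1\<close> fC in auto)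
        finally show ?thesis using nH by simp
      qed
    qed
    thus "(of_bool (Hgt h (insert (dep C (walk_of n \<sigma>)) C)) :: real) \<le> (of_bool (Hgt h C) :: real) + (\<Sum>u\<in>{u\<in>C. card u = h - 1}. (of_bool (vert n \<sigma> (n - card u) = u) :: real))"
      unfolding d_def .
  qed
qed



lemma cnt_le_binom: "Inv n C \<Longrightarrow> cnt j C \<le> real (n choose j)"
proof -
  assume inv: "Inv n C"
  have "{w\<in>C. card w = j} \<subseteq> {w. w \<subseteq> {0..<n} \<and> card w = j}" using inv by (auto simp: Inv_def)
  hence "card {w\<in>C. card w = j} \<le> card {w. w \<subseteq> {0..<n} \<and> card w = j}"
    by (rule card_mono[rotated]) (rule finite_subset[of _ "Pow {0..<n}"], auto)
  also have "\<dots> = n choose j" using n_subsets[of "{0..<n}" j] by simp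
  finally show ?thesis by (simp add: cnt_def)
qed

definition Acnt :: "nat \<Rightarrow> nat \<Rightarrow> nat \<Rightarrow> ennreal" where
  "Acnt n j t = (\<integral>\<^sup>+C. ennreal (cnt j C) \<partial>dla n t)"

definition Hg :: "nat \<Rightarrow> nat \<Rightarrow> nat \<Rightarrow> ennreal" where
  "Hg n h t = (\<integral>\<^sup>+C. ennreal (of_bool (Hgt h C)) \<partial>dla n t)"

lemma ennreal_split: "0 \<le> a \<Longrightarrow> 0 \<le> b \<Longrightarrow> 0 \<le> c \<Longrightarrow> ennreal (a + b / c) = ennreal a + ennreal b * ennreal (1 / c)"
  by (simp add: ennreal_plus ennreal_mult[symmetric])

lemma Acnt_step:
  assumes "1 \<le> j"
  shows "Acnt n j (Suc t) \<le> Acnt n j t + Acnt n (j - 1) t * ennreal (1 / real (n choose (j - 1)))"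
proof -
  have "Acnt n j (Suc t) = (\<integral>\<^sup>+C. (\<integral>\<^sup>+C'. ennreal (cnt j C') \<partial>dla_step n C) \<partial>dla n t)"
    by (simp add: Acnt_def)
  also have "\<dots> \<le> (\<integral>\<^sup>+C. ennreal (cnt j C) + ennreal (cnt (j - 1) C) * ennreal (1 / real (n choose (j - 1))) \<partial>dla n t)"
  proof (rule nn_integral_mono_AE, rule AE_pmfI)
    fix C assume "C \<in> set_pmf (dla n t)"
    hence "Inv n C" by (rule dla_inv)
    have e: "ennreal (cnt j C + cnt (j - 1) C / real (n choose (j - 1))) = ennreal (cnt j C) + ennreal (cnt (j - 1) C) * ennreal (1 / real (n choose (j - 1)))"
      by (rule ennreal_split) (auto simp: cnt_nonneg)
    from step_cnt[OF \<open>Inv n C\<close> assms] show "(\<integral>\<^sup>+C'. ennreal (cnt j C') \<partial>dla_step n C) \<le> ennreal (cnt j C) + ennreal (cnt (j - 1) C) * ennreal (1 / real (n choose (j - 1)))"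
      unfolding e .
  qed
  also have "\<dots> = Acnt n j t + Acnt n (j - 1) t * ennreal (1 / real (n choose (j - 1)))"
    unfolding Acnt_def by (simp add: nn_integral_add nn_integral_multc)
  finally show ?thesis .
qed

lemma Hg_step:
  assumes "1 \<le> h"
  shows "Hg n h (Suc t) \<le> Hg n h t + Acnt n (h - 1) t * ennreal (1 / real (n choose (h - 1)))"
proof -
  have "Hg n h (Suc t) = (\<integral>\<^sup>+C. (\<integral>\<^sup>+C'. ennreal (of_bool (Hgt h C')) \<partial>dla_step n C) \<partial>dla n t)"
    by (simp add: Hg_def)
  also have "\<dots> \<le> (\<integral>\<^sup>+C. ennreal (of_bool (Hgt h C)) + ennreal (cnt (h - 1) C) * ennreal (1 / real (n choose (h - 1))) \<partial>dla n t)"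
  proof (rule nn_integral_mono_AE, rule AE_pmfI)
    fix C assume "C \<in> set_pmf (dla n t)"
    hence "Inv n C" by (rule dla_inv)
    have e: "ennreal (of_bool (Hgt h C) + cnt (h - 1) C / real (n choose (h - 1))) = ennreal (of_bool (Hgt h C)) + ennreal (cnt (h - 1) C) * ennreal (1 / real (n choose (h - 1)))"
      by (rule ennreal_split) (auto simp: cnt_nonneg)
    from step_hgt[OF \<open>Inv n C\<close> assms] show "(\<integral>\<^sup>+C'. ennreal (of_bool (Hgt h C')) \<partial>dla_step n C) \<le> ennreal (of_bool (Hgt h C)) + ennreal (cnt (h - 1) C) * ennreal (1 / real (n choose (h - 1)))"
      unfolding e .
  qed
  also have "\<dots> = Hg n h t + Acnt n (h - 1) t * ennreal (1 / real (n choose (h - 1)))"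
    unfolding Acnt_def Hg_def by (simp add: nn_integral_add nn_integral_multc)
  finally show ?thesis .
qed

lemma Acnt_le_binom: "Acnt n j t \<le> ennreal (real (n choose j))"
proof -
  have "Acnt n j t \<le> (\<integral>\<^sup>+C. ennreal (real (n choose j)) \<partial>dla n t)"
    unfolding Acnt_def by (rule nn_integral_mono_AE, rule AE_pmfI) (use dla_inv cnt_le_binom in \<open>auto intro: ennreal_leI\<close>)
  also have "\<dots> = ennreal (real (n choose j))" by (simp add: measure_pmf.emeasure_space_1)
  finally show ?thesis .
qed

lemma pow_bern: "0 \<le> (x::real) \<Longrightarrow> x ^ (p + 1) + real (p + 1) * x ^ p \<le> (x + 1) ^ (p + 1)"
proof (induction p)
  case 0 thus ?case by simp
next
  case (Suc p)
  have "(x + 1) ^ (Suc p + 1) = (x + 1) * (x + 1) ^ (p + 1)" by simp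
  also have "\<dots> \<ge> (x + 1) * (x ^ (p + 1) + real (p + 1) * x ^ p)"
    using Suc by (intro mult_left_mono) auto
  finally have 1: "(x + 1) * (x ^ (p + 1) + real (p + 1) * x ^ p) \<le> (x + 1) ^ (Suc p + 1)" .
  have "x ^ (Suc p + 1) + real (Suc p + 1) * x ^ Suc p \<le> (x + 1) * (x ^ (p + 1) + real (p + 1) * x ^ p)"
    using Suc.prems by (simp add: algebra_simps)
  with 1 show ?case by linarith
qed

lemma ennreal_comb: "0 \<le> a \<Longrightarrow> 0 \<le> b \<Longrightarrow> 0 \<le> c \<Longrightarrow> ennreal a + ennreal b * ennreal c = ennreal (a + b * c)"
  by (simp add: ennreal_mult ennreal_plus)

definition fm :: "real \<Rightarrow> nat \<Rightarrow> nat \<Rightarrow> real" where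
  "fm B m t = real t ^ (m + 1) / (fact (m + 1) * B ^ m)"

lemma fm_nonneg: "0 < B \<Longrightarrow> 0 \<le> fm B m t" by (simp add: fm_def)

lemma fm_step:
  assumes B: "0 < B" and B': "B \<le> B'"
  shows "fm B (Suc m) t + fm B m t * (1 / B') \<le> fm B (Suc m) (Suc t)"
proof -
  have "fm B m t * (1 / B') \<le> fm B m t * (1 / B)"
    using B B' fm_nonneg[OF B] by (intro mult_left_mono) (auto simp: field_simps)
  also have "fm B m t * (1 / B) = real t ^ (m + 1) / (fact (m + 1) * B ^ (m + 1))"
    by (simp add: fm_def field_simps)
  finally have 1: "fm B m t * (1 / B') \<le> real t ^ (m + 1) / (fact (m + 1) * B ^ (m + 1))" .
  define D where "D = fact (m + 2) * B ^ (m + 1)"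
  have D: "D > 0" using B by (simp add: D_def)
  have "real t ^ (m + 2) + real (m + 2) * real t ^ (m + 1) \<le> (real t + 1) ^ (m + 2)"
    using pow_bern[of "real t" "m + 1"] by simp
  hence "(real t ^ (m + 2) + real (m + 2) * real t ^ (m + 1)) / D \<le> (real t + 1) ^ (m + 2) / D"
    using D by (intro divide_right_mono) auto
  moreover have "(real t ^ (m + 2) + real (m + 2) * real t ^ (m + 1)) / D
      = fm B (Suc m) t + real t ^ (m + 1) / (fact (m + 1) * B ^ (m + 1))"
  proof -
    have fD: "D = real (m + 2) * fact (m + 1) * B ^ (m + 1)" unfolding D_def
      by (metis fact_Suc add_2_eq_Suc' add_Suc_right Suc_eq_plus1 of_nat_Suc mult.assoc)
    have gen: "c > 0 \<Longrightarrow> F > 0 \<Longrightarrow> P > 0 \<Longrightarrow> (a + c*b)/(c*F*P) = a/(c*F*P) + b/(F*P)" for a b c F P :: real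
      by (simp add: field_simps)
    have "(real t ^ (m + 2) + real (m + 2) * real t ^ (m + 1)) / D
        = real t ^ (m + 2) / D + real t ^ (m + 1) / (fact (m + 1) * B ^ (m + 1))"
      unfolding fD by (rule gen) (use B in auto)
    moreover have "real t ^ (m + 2) / D = fm B (Suc m) t" unfolding D_def fm_def by (simp add: add.commute)
    ultimately show ?thesis by simp
  qed
  moreover have "(real t + 1) ^ (m + 2) / D = fm B (Suc m) (Suc t)"
    unfolding D_def fm_def by (simp add: add.commute)
  ultimately show ?thesis using 1 by linarith
qed

lemma Acnt_bound:
  assumes B: "0 < B" and Bi: "\<And>i. 1 \<le> i \<Longrightarrow> i \<le> m \<Longrightarrow> B \<le> real (n choose (k + i))"
  shows "Acnt n (k + 1 + m) t \<le> ennreal (fm B m t)"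
  using Bi
proof (induction m arbitrary: t)
  case 0
  show ?case
  proof (induction t)
    case 0 thus ?case by (simp add: Acnt_def fm_def cnt_def)
  next
    case (Suc t)
    have "Acnt n (k + 1 + 0) (Suc t) \<le> Acnt n (k + 1) t + Acnt n k t * ennreal (1 / real (n choose k))"
      using Acnt_step[of "k + 1" n t] by simp
    also have "\<dots> \<le> ennreal (real t) + ennreal (real (n choose k)) * ennreal (1 / real (n choose k))"
      using Suc Acnt_le_binom[of n k t] by (intro add_mono mult_right_mono) (auto simp: fm_def)
    also have "\<dots> \<le> ennreal (real t) + 1"
    proof -
      have "ennreal (real (n choose k)) * ennreal (1 / real (n choose k)) = ennreal (real (n choose k) * (1 / real (n choose k)))"
        by (rule ennreal_mult[symmetric]) auto
      also have "\<dots> \<le> ennreal 1" by (rule ennreal_leI) (cases "n choose k = 0", auto)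
      finally show ?thesis by (intro add_left_mono) simp
    qed
    also have "\<dots> = ennreal (real (Suc t))"
    proof -
      have "ennreal (real t + 1) = ennreal (real t) + ennreal 1" by (rule ennreal_plus) auto
      thus ?thesis by (simp add: add.commute)
    qed
    finally show ?case by (simp add: fm_def)
  qed
next
  case (Suc m)
  have IH: "Acnt n (k + 1 + m) t \<le> ennreal (fm B m t)" for t
    using Suc.IH Suc.prems by auto
  have Bm: "B \<le> real (n choose (k + 1 + m))" using Suc.prems[of "Suc m"] by simp
  show ?case
  proof (induction t)
    case 0 thus ?case by (simp add: Acnt_def fm_def cnt_def)
  next
    case (Suc t)
    have "Acnt n (k + 1 + Suc m) (Suc t) \<le> Acnt n (k + 1 + Suc m) t + Acnt n (k + 1 + m) t * ennreal (1 / real (n choose (k + 1 + m)))"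
      using Acnt_step[of "k + 1 + Suc m" n t] by simp
    also have "\<dots> \<le> ennreal (fm B (Suc m) t) + ennreal (fm B m t) * ennreal (1 / real (n choose (k + 1 + m)))"
      using Suc IH by (intro add_mono mult_right_mono) auto
    also have "\<dots> = ennreal (fm B (Suc m) t + fm B m t * (1 / real (n choose (k + 1 + m))))"
      using fm_nonneg[OF B] by (rule_tac ennreal_comb) auto
    also have "\<dots> \<le> ennreal (fm B (Suc m) (Suc t))"
      using fm_step[OF B Bm] by (rule ennreal_leI)
    finally show ?case .
  qed
qed

lemma Hg_bound:
  assumes B: "0 < B" and Bi: "\<And>i. 1 \<le> i \<Longrightarrow> i \<le> m \<Longrightarrow> B \<le> real (n choose (k + i))" and m: "1 \<le> m"
  shows "Hg n (k + 1 + m) t \<le> ennreal (fm B m t)"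
proof -
  obtain m' where m': "m = Suc m'" using m by (cases m) auto
  have IH: "Acnt n (k + 1 + m') t \<le> ennreal (fm B m' t)" for t
    by (rule Acnt_bound[OF B]) (use Bi m' in auto)
  have Bm: "B \<le> real (n choose (k + 1 + m'))" using Bi[of m] m' by simp
  show ?thesis unfolding m'
  proof (induction t)
    case 0
    have "\<not> Hgt (k + 1 + Suc m') {{}}" by (simp add: Hgt_def)
    thus ?case by (simp add: Hg_def)
  next
    case (Suc t)
    have "Hg n (k + 1 + Suc m') (Suc t) \<le> Hg n (k + 1 + Suc m') t + Acnt n (k + 1 + m') t * ennreal (1 / real (n choose (k + 1 + m')))"
      using Hg_step[of "k + 1 + Suc m'" n t] by simp
    also have "\<dots> \<le> ennreal (fm B (Suc m') t) + ennreal (fm B m' t) * ennreal (1 / real (n choose (k + 1 + m')))"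
      using Suc IH by (intro add_mono mult_right_mono) auto
    also have "\<dots> = ennreal (fm B (Suc m') t + fm B m' t * (1 / real (n choose (k + 1 + m'))))"
      using fm_nonneg[OF B] by (rule_tac ennreal_comb) auto
    also have "\<dots> \<le> ennreal (fm B (Suc m') (Suc t))"
      using fm_step[OF B Bm] by (rule ennreal_leI)
    finally show ?case .
  qed
qed

lemma prob_Hgt:
  assumes B: "0 < B" and Bi: "\<And>i. 1 \<le> i \<Longrightarrow> i \<le> m \<Longrightarrow> B \<le> real (n choose (k + i))" and m: "1 \<le> m"
  shows "measure_pmf.prob (dla n t) {C. Hgt (k + 1 + m) C} \<le> fm B m t"
proof -
  have "emeasure (dla n t) {C. Hgt (k + 1 + m) C} = (\<integral>\<^sup>+C. indicator {C. Hgt (k + 1 + m) C} C \<partial>dla n t)"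
    by simp
  also have "\<dots> = Hg n (k + 1 + m) t"
    unfolding Hg_def by (intro nn_integral_cong) (simp add: indicator_def)
  also have "\<dots> \<le> ennreal (fm B m t)" by (rule Hg_bound[OF B Bi m])
  finally show ?thesis using fm_nonneg[OF B] by (simp add: measure_pmf.emeasure_eq_measure)
qed



lemma binom_ge_N:
  assumes "1 \<le> i" "i < N"
  shows "N \<le> N choose i"
proof (cases "2 * i \<le> N")
  case True
  have "N choose 1 \<le> N choose i" by (rule binomial_mono) (use assms True in auto)
  thus ?thesis by simp
next
  case False
  have "N choose 1 \<le> N choose (N - i)" by (rule binomial_mono) (use assms False in auto)
  thus ?thesis using binomial_symmetric[of i N] assms by simp
qed

lemma expm1_le: "0 \<le> (x::real) \<Longrightarrow> exp x - 1 \<le> x * exp x"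
proof -
  assume "0 \<le> x"
  have "1 - x \<le> exp (-x)" using exp_ge_add_one_self[of "-x"] by simp
  hence "(1 - x) * exp x \<le> exp (-x) * exp x" by (intro mult_right_mono) auto
  also have "\<dots> = 1" by (simp add: exp_minus field_simps)
  finally show ?thesis by (simp add: algebra_simps)
qed

lemma aw_bound:
  assumes w: "w \<in> Wset n v h" and hn: "h \<le> n" and lam: "0 \<le> lam"
  shows "aw n v lam w \<le> lam * exp (lam / real (n - card v)) / real ((n - card v) choose (card w - card v))"
proof -
  let ?k = "card v"
  have wv: "v \<subset> w" "w \<subseteq> {0..<n}" "card w < h" using w by (auto simp: Wset_def)
  have fw: "finite w" using wv finite_subset by blast
  have kw: "?k < card w" using psubset_card_mono[OF fw wv(1)] .
  define b where "b = (n - ?k) choose (card w - ?k)"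
  have bge: "n - ?k \<le> b" unfolding b_def by (rule binom_ge_N) (use kw wv hn in auto)
  have nk: "0 < n - ?k" using kw wv hn by linarith
  have bpos: "0 < real b" using bge nk by linarith
  have x0: "0 \<le> lam / real b" using lam bpos by simp
  have xle: "lam / real b \<le> lam / real (n - ?k)"
    using bge nk lam by (intro divide_left_mono) auto
  have "aw n v lam w = exp (lam / real b) - 1" by (simp add: aw_def b_def)
  also have "\<dots> \<le> lam / real b * exp (lam / real b)" by (rule expm1_le[OF x0])
  also have "\<dots> \<le> lam / real b * exp (lam / real (n - ?k))"
    using xle x0 by (intro mult_left_mono) auto
  finally show ?thesis by (simp add: b_def)
qed

lemma card_Wlevel:
  assumes v: "v \<subseteq> {0..<n}" and j: "card v < j"
  shows "card {w. v \<subseteq> w \<and> w \<subseteq> {0..<n} \<and> card w = j} = (n - card v) choose (j - card v)"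
proof -
  have fv: "finite v" using v finite_subset by blast
  let ?X = "{w. v \<subseteq> w \<and> w \<subseteq> {0..<n} \<and> card w = j}"
  let ?Y = "{B. B \<subseteq> {0..<n} - v \<and> card B = j - card v}"
  have inj: "inj_on (\<lambda>w. w - v) ?X"
  proof (rule inj_onI)
    fix w w' assume "w \<in> ?X" "w' \<in> ?X" "w - v = w' - v"
    thus "w = w'" by blast
  qed
  have img: "(\<lambda>w. w - v) ` ?X = ?Y"
  proof (intro equalityI subsetI)
    fix B assume "B \<in> (\<lambda>w. w - v) ` ?X"
    then obtain w where w: "v \<subseteq> w" "w \<subseteq> {0..<n}" "card w = j" "B = w - v" by blast
    have "finite w" using w finite_subset by blast
    thus "B \<in> ?Y" using w fv by (auto simp: card_Diff_subset)
  next
    fix B assume B: "B \<in> ?Y"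
    have fB: "finite B" using B finite_subset by blast
    have "B \<inter> v = {}" using B by auto
    hence "card (B \<union> v) = card B + card v" using fB fv by (simp add: card_Un_disjoint)
    hence "B \<union> v \<in> ?X" using B v j by auto
    moreover have "B = (B \<union> v) - v" using B by auto
    ultimately show "B \<in> (\<lambda>w. w - v) ` ?X" by blast
  qed
  have "card ?X = card ?Y" using card_image[OF inj] img by simp
  also have "\<dots> = card ({0..<n} - v) choose (j - card v)" by (rule n_subsets) simp
  also have "card ({0..<n} - v) = n - card v" using v fv by (simp add: card_Diff_subset)
  finally show ?thesis .
qed

lemma sum_W_bound:
  assumes v: "v \<subseteq> {0..<n}" and hn: "h \<le> n" and lam: "0 \<le> lam"
  shows "(\<Sum>w\<in>Wset n v h. aw n v lam w / real (n choose card w))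
      \<le> lam * exp (lam / real (n - card v)) * (\<Sum>j\<in>{card v + 1..<h}. 1 / real (n choose j))"
proof -
  let ?k = "card v" and ?W = "Wset n v h" and ?E = "exp (lam / real (n - card v))"
  have fW: "finite ?W" by (rule finite_Wset)
  have "(\<Sum>w\<in>?W. aw n v lam w / real (n choose card w))
      \<le> (\<Sum>w\<in>?W. lam * ?E / real ((n - ?k) choose (card w - ?k)) / real (n choose card w))"
    by (rule sum_mono, rule divide_right_mono) (use aw_bound hn lam in auto)
  also have "\<dots> = (\<Sum>j\<in>{?k + 1..<h}. \<Sum>w\<in>{w\<in>?W. card w = j}. lam * ?E / real ((n - ?k) choose (card w - ?k)) / real (n choose card w))"
  proof (rule sum.group[symmetric, OF fW])
    show "finite {?k + 1..<h}" by simp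
    show "card ` ?W \<subseteq> {?k + 1..<h}"
    proof
      fix j assume "j \<in> card ` ?W"
      then obtain w where w: "w \<in> ?W" "j = card w" by blast
      hence "v \<subset> w" "w \<subseteq> {0..<n}" "card w < h" by (auto simp: Wset_def)
      moreover have "finite w" using calculation finite_subset by blast
      ultimately have "?k < card w" "card w < h" using psubset_card_mono by auto
      thus "j \<in> {?k + 1..<h}" using w(2) by simp
    qed
  qed
  also have "\<dots> = (\<Sum>j\<in>{?k + 1..<h}. lam * ?E * (1 / real (n choose j)))"
  proof (rule sum.cong[OF refl])
    fix j assume j: "j \<in> {?k + 1..<h}"
    have eq: "{w\<in>?W. card w = j} = {w. v \<subseteq> w \<and> w \<subseteq> {0..<n} \<and> card w = j}"
      using j by (auto simp: Wset_def)
    have cW: "card {w\<in>?W. card w = j} = (n - ?k) choose (j - ?k)"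
      unfolding eq using card_Wlevel[OF v, of j] j by simp
    have pos: "0 < (n - ?k) choose (j - ?k)" by (intro zero_less_binomial diff_le_mono) (use j hn in auto)
    have "(\<Sum>w\<in>{w\<in>?W. card w = j}. lam * ?E / real ((n - ?k) choose (card w - ?k)) / real (n choose card w))
        = (\<Sum>w\<in>{w\<in>?W. card w = j}. lam * ?E / real ((n - ?k) choose (j - ?k)) / real (n choose j))"
      by (rule sum.cong) auto
    also have "\<dots> = real ((n - ?k) choose (j - ?k)) * (lam * ?E / real ((n - ?k) choose (j - ?k)) / real (n choose j))"
      using cW by simp
    also have "\<dots> = lam * ?E * (1 / real (n choose j))" using pos by simp
    finally show "(\<Sum>w\<in>{w\<in>?W. card w = j}. lam * ?E / real ((n - ?k) choose (card w - ?k)) / real (n choose card w))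
        = lam * ?E * (1 / real (n choose j))" .
  qed
  also have "\<dots> = lam * ?E * (\<Sum>j\<in>{?k + 1..<h}. 1 / real (n choose j))" by (simp add: sum_distrib_left)
  finally show ?thesis .
qed

lemma geo_half: "(\<Sum>j\<in>{a..<b}. (1/2::real) ^ (j - a)) \<le> 2"
proof -
  have key: "a \<le> b \<Longrightarrow> (\<Sum>j\<in>{a..<b}. (1/2::real) ^ (j - a)) + 2 * (1/2) ^ (b - a) = 2"
  proof (induction b)
    case 0 thus ?case by simp
  next
    case (Suc b)
    show ?case
    proof (cases "a = Suc b")
      case True thus ?thesis by simp
    next
      case False
      hence ab: "a \<le> b" using Suc.prems by simp
      have "(\<Sum>j\<in>{a..<Suc b}. (1/2::real) ^ (j - a)) = (\<Sum>j\<in>{a..<b}. (1/2::real) ^ (j - a)) + (1/2) ^ (b - a)"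
        using ab by simp
      moreover have "2 * (1/2::real) ^ (Suc b - a) = (1/2) ^ (b - a)" using ab by (simp add: Suc_diff_le)
      ultimately show ?thesis using Suc.IH[OF ab] by simp
    qed
  qed
  show ?thesis
  proof (cases "a \<le> b")
    case True
    have "0 \<le> 2 * (1/2::real) ^ (b - a)" by simp
    thus ?thesis using key[OF True] by linarith
  qed simp
qed

lemma binom_double:
  assumes "3 * j + 2 \<le> n"
  shows "2 * real (n choose j) \<le> real (n choose Suc j)"
proof -
  have "(n choose Suc j) * Suc j = (n choose j) * (n - j)" by (rule binom_ratio) (use assms in auto)
  hence e: "real (n choose Suc j) * (j + 1) = real (n choose j) * (n - j)"
    using assms by (metis Suc_eq_plus1 of_nat_diff of_nat_mult of_nat_Suc add.commute le_add2 le_trans)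
  have "2 * (j + 1) \<le> n - j" using assms by arith
  hence "2 * real (j + 1) \<le> real (n - j)" by linarith
  hence "real (n choose j) * (2 * real (j + 1)) \<le> real (n choose j) * real (n - j)" by (intro mult_left_mono) auto
  hence "2 * real (n choose j) * real (j + 1) \<le> real (n choose Suc j) * real (j + 1)" using e by (simp add: algebra_simps)
  thus ?thesis by (simp add: mult_le_cancel_right)
qed

lemma binom_ratio_bound:
  assumes kj: "k + 2 \<le> j" and jh: "3 * j \<le> n + 1" and kn: "k + 1 < n"
  shows "real (n choose (k + 1)) / real (n choose j) \<le> (real k + 2) / (real n - real k - 1) * (1/2) ^ (j - (k + 2))"
  using kj jh
proof (induction j rule: dec_induct)
  case base
  have "(n choose Suc (k + 1)) * Suc (k + 1) = (n choose (k + 1)) * (n - (k + 1))" by (rule binom_ratio) (use kn in auto)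
  hence "real ((n choose (k + 2)) * (k + 2)) = real ((n choose (k + 1)) * (n - (k + 1)))"
    by (simp add: numeral_2_eq_2)
  hence e0: "real (n choose (k + 2)) * real (k + 2) = real (n choose (k + 1)) * real (n - (k + 1))"
    by (simp only: of_nat_mult)
  have "real (n - (k + 1)) = real n - real k - 1" using kn by (simp add: of_nat_diff)
  with e0 have e: "real (n choose (k + 2)) * (real k + 2) = real (n choose (k + 1)) * (real n - real k - 1)"
    by (simp add: add.commute)
  have pos: "0 < n choose (k + 2)" using base by simp
  have nk: "0 < real n - real k - 1" using kn by simp
  show ?case using e pos nk by (simp add: field_simps)
next
  case (step i)
  have j3: "3 * i + 2 \<le> n" using step.prems by simp
  have d: "2 * real (n choose i) \<le> real (n choose Suc i)" by (rule binom_double[OF j3])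
  have pos: "0 < n choose i" using j3 by simp
  have IH: "real (n choose (k + 1)) / real (n choose i) \<le> (real k + 2) / (real n - real k - 1) * (1/2) ^ (i - (k + 2))"
    using step.IH step.prems by simp
  have "real (n choose (k + 1)) / real (n choose Suc i) \<le> real (n choose (k + 1)) / (2 * real (n choose i))"
    using d pos j3 by (intro divide_left_mono) (auto intro!: mult_pos_pos)
  also have "\<dots> = (1/2) * (real (n choose (k + 1)) / real (n choose i))" by simp
  also have "\<dots> \<le> (1/2) * ((real k + 2) / (real n - real k - 1) * (1/2) ^ (i - (k + 2)))"
    using IH by (intro mult_left_mono) auto
  also have "\<dots> = (real k + 2) / (real n - real k - 1) * (1/2) ^ (Suc i - (k + 2))"
  proof -
    have "Suc i - (k + 2) = Suc (i - (k + 2))" using step.hyps(1) by simp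
    thus ?thesis by (simp only: power_Suc) (rule mult.left_commute)
  qed
  finally show ?case .
qed

lemma sum_level_bound:
  assumes h3: "3 * h \<le> n" and kh: "k + 1 < h"
  shows "(\<Sum>j\<in>{k + 1..<h}. 1 / real (n choose j))
      \<le> (1 + 2 * ((real k + 2) / (real n - real k - 1))) / real (n choose (k + 1))"
proof -
  let ?B = "real (n choose (k + 1))" and ?r = "(real k + 2) / (real n - real k - 1)"
  have kn: "k + 1 < n" using h3 kh by linarith
  have Bpos: "0 < ?B" using kn by simp
  have r0: "0 \<le> ?r" using kn by simp
  have "{k + 1..<h} = insert (k + 1) {k + 2..<h}" using kh by auto
  hence "(\<Sum>j\<in>{k + 1..<h}. 1 / real (n choose j)) = 1 / ?B + (\<Sum>j\<in>{k + 2..<h}. 1 / real (n choose j))"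
    by simp
  also have "(\<Sum>j\<in>{k + 2..<h}. 1 / real (n choose j)) \<le> (\<Sum>j\<in>{k + 2..<h}. ?r * (1/2) ^ (j - (k + 2)) / ?B)"
  proof (rule sum_mono)
    fix j assume j: "j \<in> {k + 2..<h}"
    have "?B / real (n choose j) \<le> ?r * (1/2) ^ (j - (k + 2))"
      by (rule binom_ratio_bound) (use j h3 kn in auto)
    hence "(?B / real (n choose j)) / ?B \<le> ?r * (1/2) ^ (j - (k + 2)) / ?B"
      using Bpos by (intro divide_right_mono) auto
    moreover have "(?B / real (n choose j)) / ?B = 1 / real (n choose j)" using Bpos by simp
    ultimately show "1 / real (n choose j) \<le> ?r * (1/2) ^ (j - (k + 2)) / ?B" by simp
  qed
  also have "\<dots> = ?r / ?B * (\<Sum>j\<in>{k + 2..<h}. (1/2::real) ^ (j - (k + 2)))"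
    by (simp add: sum_distrib_left)
  also have "\<dots> \<le> ?r / ?B * 2" using geo_half r0 Bpos by (intro mult_left_mono) auto
  finally have "(\<Sum>j\<in>{k + 1..<h}. 1 / real (n choose j)) \<le> 1 / ?B + ?r / ?B * 2" by simp
  moreover have "(1 + 2 * ?r) / ?B = 1 / ?B + ?r / ?B * 2" by (simp add: add_divide_distrib)
  ultimately show ?thesis by linarith
qed



lemma card_level: "card (level n k) = n choose k"
  using n_subsets[of "{0..<n}" k] by (simp add: level_def)

lemma finite_level: "finite (level n k)"
  by (rule finite_subset[of _ "Pow {0..<n}"]) (auto simp: level_def)

lemma main_bound:
  fixes n k m t :: nat and lam eps :: real
  assumes m: "1 \<le> m" and h3: "3 * (k + 1 + m) \<le> n" and lam: "0 \<le> lam"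
  defines "B \<equiv> real (n choose (k + 1))"
  defines "r \<equiv> (real k + 2) / (real n - real k - 1)"
  shows "measure_pmf.prob (dla n t) {C. \<exists>v \<in> level n k. eps \<le> Phi n C v}
    \<le> fm B m t + real (n choose k) * exp (lam * exp (lam / real (n - k)) * (1 + 2 * r) / B * real t - lam * eps)"
proof -
  define h where "h = k + 1 + m"
  define M where "M = dla n t"
  define q where "q = lam * exp (lam / real (n - k)) * (1 + 2 * r) / B"
  have hn: "h \<le> n" "0 < h" "k + 1 < h" "3 * h \<le> n" using h3 m by (auto simp: h_def)
  have kn: "k + 1 < n" using hn by linarith
  have Bpos: "0 < B" unfolding B_def using kn by simp
  have r0: "0 \<le> r" unfolding r_def using kn by simp
  let ?H = "{C. Hgt h C}"
  let ?V = "\<lambda>v. {C. eps \<le> Sv n v C \<and> (\<forall>w\<in>C. card w < h)}"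
  have sub: "{C. \<exists>v \<in> level n k. eps \<le> Phi n C v} \<subseteq> ?H \<union> (\<Union>v\<in>level n k. ?V v)"
  proof
    fix C assume "C \<in> {C. \<exists>v \<in> level n k. eps \<le> Phi n C v}"
    then obtain v where v: "v \<in> level n k" "eps \<le> Phi n C v" by blast
    show "C \<in> ?H \<union> (\<Union>v\<in>level n k. ?V v)"
    proof (cases "Hgt h C")
      case False
      hence "\<forall>w\<in>C. card w < h" by (auto simp: Hgt_def)
      moreover have "Phi n C v \<le> Sv n v C" by (rule Phi_le_S) (use v in \<open>auto simp: level_def\<close>)
      ultimately have "C \<in> ?V v" using v by auto
      thus ?thesis using v(1) by blast
    qed simp
  qed
  have pH: "measure_pmf.prob M ?H \<le> fm B m t"
    unfolding M_def h_def
  proof (rule prob_Hgt[OF Bpos _ m])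
    fix i assume "1 \<le> i" "i \<le> m"
    thus "B \<le> real (n choose (k + i))" unfolding B_def using h3 by (intro of_nat_mono binomial_mono) auto
  qed
  have pV: "measure_pmf.prob M (?V v) \<le> exp (q * real t - lam * eps)" if v: "v \<in> level n k" for v
  proof -
    have vs: "v \<subseteq> {0..<n}" "card v = k" using v by (auto simp: level_def)
    define Q where "Q = 1 + (\<Sum>w\<in>Wset n v h. aw n v lam w / real (n choose card w))"
    have pQ: "measure_pmf.prob M (?V v) \<le> Q ^ t / exp (lam * eps)"
      unfolding M_def Q_def by (rule Y_markov[OF hn(1,2) lam])
    have "Q \<le> 1 + q"
    proof -
      have "(\<Sum>w\<in>Wset n v h. aw n v lam w / real (n choose card w))
          \<le> lam * exp (lam / real (n - k)) * (\<Sum>j\<in>{k + 1..<h}. 1 / real (n choose j))"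
        using sum_W_bound[OF vs(1) hn(1) lam] vs by simp
      also have "\<dots> \<le> lam * exp (lam / real (n - k)) * ((1 + 2 * r) / B)"
        using sum_level_bound[OF hn(4) hn(3)] lam unfolding r_def B_def by (intro mult_left_mono) auto
      finally show ?thesis unfolding Q_def q_def by simp
    qed
    hence "Q ^ t \<le> (1 + q) ^ t"
      using aw_nonneg[OF lam] unfolding Q_def by (intro power_mono) (auto intro!: add_nonneg_nonneg sum_nonneg)
    also have "\<dots> \<le> exp q ^ t"
    proof (rule power_mono)
      show "1 + q \<le> exp q" by simp
      show "0 \<le> 1 + q" unfolding q_def using lam Bpos r0 by simp
    qed
    also have "\<dots> = exp (q * real t)" by (simp add: exp_of_nat_mult[symmetric] mult.commute)
    finally have "Q ^ t / exp (lam * eps) \<le> exp (q * real t) / exp (lam * eps)" by (simp add: divide_right_mono)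
    also have "\<dots> = exp (q * real t - lam * eps)" by (simp add: exp_diff)
    finally show ?thesis using pQ by linarith
  qed
  have "measure_pmf.prob M {C. \<exists>v \<in> level n k. eps \<le> Phi n C v} \<le> measure_pmf.prob M (?H \<union> (\<Union>v\<in>level n k. ?V v))"
    by (rule measure_pmf.finite_measure_mono[OF sub]) simp
  also have "\<dots> \<le> measure_pmf.prob M ?H + measure_pmf.prob M (\<Union>v\<in>level n k. ?V v)"
    by (rule measure_Un_le) auto
  also have "measure_pmf.prob M (\<Union>v\<in>level n k. ?V v) \<le> (\<Sum>v\<in>level n k. measure_pmf.prob M (?V v))"
    by (rule measure_pmf.finite_measure_subadditive_finite[OF finite_level]) auto
  also have "\<dots> \<le> (\<Sum>v\<in>level n k. exp (q * real t - lam * eps))" by (rule sum_mono) (rule pV)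
  also have "\<dots> = real (n choose k) * exp (q * real t - lam * eps)" by (simp add: card_level)
  finally show ?thesis using pH unfolding M_def q_def by simp
qed



lemma ln_le_of: "0 < (x::real) \<Longrightarrow> x \<le> exp y \<Longrightarrow> ln x \<le> y"
  by (metis exp_gt_zero ln_exp ln_le_cancel_iff)

lemma pow_fact_le_exp: "0 \<le> (x::real) \<Longrightarrow> x ^ k / fact k \<le> exp x"
proof -
  assume x: "0 \<le> x"
  have s: "summable (\<lambda>n. x ^ n /\<^sub>R fact n)" by (rule summable_exp_generic)
  have "sum (\<lambda>n. x ^ n /\<^sub>R fact n) {k} \<le> suminf (\<lambda>n. x ^ n /\<^sub>R fact n)"
    by (rule sum_le_suminf[OF s]) (use x in auto)
  thus ?thesis by (simp add: exp_def divide_inverse mult.commute)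
qed

lemma binom_exp_bound:
  assumes k: "0 < k" "k \<le> n"
  shows "real (n choose k) \<le> exp (real k * (1 + ln (real n / real k)))"
proof -
  have "real (n choose k) * fact k \<le> real n ^ k"
    using binomial_fact_pow[of n k] by (metis of_nat_fact of_nat_le_iff of_nat_mult of_nat_power)
  hence b: "real (n choose k) \<le> real n ^ k / fact k" by (simp add: field_simps)
  have "real k ^ k / fact k \<le> exp (real k)" by (rule pow_fact_le_exp) simp
  hence f: "real k ^ k / exp (real k) \<le> fact k" by (simp add: field_simps)
  have kp: "0 < real k ^ k / exp (real k)" using k by simp
  have "real n ^ k / fact k \<le> real n ^ k / (real k ^ k / exp (real k))"
  proof (rule divide_left_mono[OF f])
    show "0 \<le> real n ^ k" by simp
    show "0 < fact k * (real k ^ k / exp (real k))" by (intro mult_pos_pos) (use kp in auto)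
  qed
  also have "\<dots> = (real n / real k) ^ k * exp (real k)" by (simp add: field_simps power_divide)
  also have "\<dots> = exp (real k * ln (real n / real k)) * exp (real k)"
  proof -
    have "exp (real k * ln (real n / real k)) = exp (ln (real n / real k)) ^ k" by (rule exp_of_nat_mult)
    also have "exp (ln (real n / real k)) = real n / real k" using k by simp
    finally show ?thesis by simp
  qed
  also have "\<dots> = exp (real k * (1 + ln (real n / real k)))" by (simp add: exp_add[symmetric] algebra_simps)
  finally show ?thesis using b by linarith
qed

lemma xlog_mono:
  assumes x: "0 < x" "x \<le> a" "a \<le> 1"
  shows "x * (1 - ln x) \<le> a * (1 - ln (a::real))"
proof -
  have a0: "0 < a" using x by simp
  have l1: "ln (x / a) \<ge> 1 - a / x"
  proof -
    have "ln (a / x) \<le> a / x - 1" by (rule ln_le_minus_one) (use x a0 in simp)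
    moreover have "ln (x / a) = - ln (a / x)" using x a0 by (simp add: ln_div)
    ultimately show ?thesis by simp
  qed
  have "x * ln (x / a) \<ge> x * (1 - a / x)" using l1 x by (intro mult_left_mono) auto
  hence "x * ln (x / a) \<ge> x - a" using x by (simp add: algebra_simps)
  hence "x * (ln x - ln a) \<ge> x - a" using x a0 by (simp add: ln_div)
  moreover have "(a - x) * (- ln a) \<ge> 0" using x by (intro mult_nonneg_nonneg) auto
  ultimately show ?thesis by (simp add: algebra_simps)
qed

lemma binom_exp_bound2:
  assumes k: "real k \<le> a * real n" and a: "0 < a" "a \<le> 1" and n: "0 < n"
  shows "real (n choose k) \<le> exp (real n * (a * (1 - ln a)))"
proof (cases "k = 0")
  case True
  have "ln a \<le> 0" using a by simp
  hence "0 \<le> 1 - ln a" by simp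
  hence "0 \<le> a * (1 - ln a)" using a by simp
  hence "1 \<le> exp (real n * (a * (1 - ln a)))" by simp
  thus ?thesis using True by simp
next
  case False
  have "a * real n \<le> real n" using a by (simp add: mult_left_le_one_le)
  hence "real k \<le> real n" using k by linarith
  hence kn: "k \<le> n" by simp
  define x where "x = real k / real n"
  have x: "0 < x" "x \<le> a" using False k n by (auto simp: x_def field_simps)
  have e1: "ln (real n / real k) = ln (real n) - ln (real k)" using n False by (simp add: ln_div)
  have e2: "ln x = ln (real k) - ln (real n)" unfolding x_def using n False by (simp add: ln_div)
  have e3: "real n * x = real k" unfolding x_def using n by simp
  have "real n * (x * (1 - ln x)) = (real n * x) * (1 - ln x)" by (rule mult.assoc[symmetric])
  also have "\<dots> = real k * (1 + ln (real n / real k))" unfolding e3 e1 e2 by simp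
  finally have "real k * (1 + ln (real n / real k)) = real n * (x * (1 - ln x))" by simp
  also have "\<dots> \<le> real n * (a * (1 - ln a))" using xlog_mono[OF x a(2)] by (intro mult_left_mono) auto
  finally show ?thesis using binom_exp_bound[of k n] False kn by (meson exp_le_cancel_iff le_zero_eq not_gr_zero order.trans)
qed

lemma e_lower: "27/10 \<le> exp (1::real)"
proof -
  have "(1 + 1 / real 100) ^ 100 \<le> exp (1::real)" by (rule exp_ge_one_plus_x_over_n_power_n) auto
  moreover have "(27/10::real) \<le> (1 + 1 / real 100) ^ 100" by (simp add: power_divide)
  ultimately show ?thesis by linarith
qed

lemma exp34: "exp (3/4::real) \<le> 214/100"
proof -
  have "exp (3/128::real) \<le> 1 + 3/128 + (3/128)^2" by (rule exp_bound) auto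
  hence "exp (3/128::real) ^ 32 \<le> (1 + 3/128 + (3/128)^2) ^ 32" by (rule power_mono) simp
  moreover have "exp (3/128::real) ^ 32 = exp (3/4)" by (simp add: exp_of_nat_mult[symmetric])
  moreover have "(1 + 3/128 + (3/128)^2::real) ^ 32 \<le> 214/100" by (simp add: power_divide)
  ultimately show ?thesis by linarith
qed

lemma ln2_upper: "ln (2::real) \<le> 7/10"
proof -
  have "(1 + (7/10) / real 50) ^ 50 \<le> exp (7/10::real)" by (rule exp_ge_one_plus_x_over_n_power_n) auto
  moreover have "(2::real) \<le> (1 + (7/10) / real 50) ^ 50" by (simp add: power_divide)
  ultimately have "2 \<le> exp (7/10::real)" by linarith
  thus ?thesis by (intro ln_le_of) auto
qed

lemma ln100_upper: "ln (100::real) \<le> 5"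
proof -
  have "(27/10::real) ^ 5 \<le> exp 1 ^ 5" using e_lower by (intro power_mono) auto
  moreover have "(100::real) \<le> (27/10) ^ 5" by (simp add: power_divide)
  moreover have "exp 1 ^ 5 = exp (5::real)" by (simp add: exp_of_nat_mult[symmetric])
  ultimately have "100 \<le> exp (5::real)" by linarith
  thus ?thesis by (intro ln_le_of) auto
qed

lemma xlnx: "0 < (x::real) \<Longrightarrow> - (x * ln x) \<le> 10/27"
proof -
  assume x: "0 < x"
  have "ln (1/x) \<le> (1/x) / exp 1"
  proof -
    have "exp (1/x / exp 1 - 1) \<ge> 1 + (1/x / exp 1 - 1)" by (rule exp_ge_add_one_self)
    hence "exp (1/x / exp 1) \<ge> exp 1 * (1/x / exp 1)" by (simp add: exp_diff field_simps)
    hence "1/x \<le> exp (1/x / exp 1)" by simp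
    thus ?thesis using x by (intro ln_le_of) auto
  qed
  hence "x * ln (1/x) \<le> x * ((1/x) / exp 1)" using x by (intro mult_left_mono) auto
  hence "- (x * ln x) \<le> 1 / exp 1" using x by (simp add: ln_div)
  also have "\<dots> \<le> 10/27" using e_lower by (simp add: field_simps)
  finally show ?thesis .
qed

lemma gap:
  fixes eps :: real
  assumes e: "0 < eps" "eps \<le> 1"
  defines "a \<equiv> min (eps\<^sup>2 / 4) (1 / 100)"
  shows "a * (1 - ln a) < 335/1000 * eps"
proof (cases "eps\<^sup>2 / 4 \<le> 1/100")
  case True
  hence aa: "a = eps\<^sup>2 / 4" unfolding a_def by simp
  have "eps ^ 2 \<le> (1/5) ^ 2" using True by (simp add: power2_eq_square)
  hence e5: "eps \<le> 1/5" by (rule power2_le_imp_le) simp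
  have l4: "ln (4::real) = 2 * ln 2" using ln_realpow[of "2::real" 2] by simp
  have "ln a = 2 * ln eps - 2 * ln 2" using e l4 unfolding aa
    by (simp add: ln_div ln_mult power2_eq_square ln_realpow[symmetric])
  hence "a * (1 - ln a) = a * (1 - (2 * ln eps - 2 * ln 2))" by simp
  also have "\<dots> = eps * (eps * (1 + 2 * ln 2) / 4 + (- (eps * ln eps)) / 2)"
    unfolding aa by (simp add: power2_eq_square algebra_simps)
  also have "eps * (1 + 2 * ln 2) / 4 + (- (eps * ln eps)) / 2 \<le> (1/5) * (1 + 2 * (7/10)) / 4 + (10/27) / 2"
    using e5 ln2_upper xlnx[OF e(1)] e(1) by (intro add_mono divide_right_mono mult_mono) auto
  finally have "a * (1 - ln a) \<le> eps * ((1/5) * (1 + 2 * (7/10)) / 4 + (10/27) / 2)"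
    using e(1) by (smt (verit) mult_left_mono)
  also have "\<dots> < 335/1000 * eps" using e(1) by simp
  finally show ?thesis .
next
  case False
  hence aa: "a = 1/100" unfolding a_def by simp
  have "(1/5) ^ 2 < eps ^ 2" using False by (simp add: power2_eq_square)
  hence "1/5 < eps" by (rule power2_less_imp_less) (use e in simp)
  hence e5: "1/5 \<le> eps" by simp
  have "a * (1 - ln a) = (1 + ln 100) / 100" unfolding aa by (simp add: ln_div)
  also have "\<dots> \<le> 6 / 100" using ln100_upper by simp
  also have "\<dots> < 335/1000 * eps" using e5 by simp
  finally show ?thesis .
qed



lemma fact_ge_64: "64 ^ (q - 64) \<le> (fact q :: real)"
proof (cases "64 \<le> q")
  case True
  thus ?thesis
  proof (induction q rule: dec_induct)
    case base thus ?case by simp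
  next
    case (step q)
    have "Suc q - 64 = Suc (q - 64)" using step.hyps(1) by simp
    hence "(64::real) ^ (Suc q - 64) = 64 * 64 ^ (q - 64)" by simp
    also have "\<dots> \<le> real (Suc q) * fact q"
      using step.IH step.hyps(1) by (intro mult_mono) auto
    also have "\<dots> = fact (Suc q)" by simp
    finally show ?case .
  qed
next
  case False
  hence "q - 64 = 0" by simp
  thus ?thesis by simp
qed

lemma fact_ge_powr: "64 powr (real n / 4 - 65) \<le> (fact (n div 4) :: real)"
proof -
  let ?q = "n div 4"
  have q: "real n / 4 - 65 \<le> real ?q - 64" by linarith
  show ?thesis
  proof (cases "64 \<le> ?q")
    case True
    have "64 powr (real n / 4 - 65) \<le> 64 powr (real ?q - 64)" using q by (intro powr_mono) auto
    also have "\<dots> = 64 powr (real (?q - 64))" using True by (simp add: of_nat_diff)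
    also have "\<dots> = 64 ^ (?q - 64)" by (simp add: powr_realpow)
    also have "\<dots> \<le> fact ?q" by (rule fact_ge_64)
    finally show ?thesis .
  next
    case False
    have "64 powr (real n / 4 - 65) \<le> 64 powr 0" using q False by (intro powr_mono) auto
    also have "\<dots> = 1" by simp
    also have "\<dots> \<le> fact ?q" by simp
    finally show ?thesis .
  qed
qed

lemma per_n_bound:
  fixes eps :: real and n k :: nat
  assumes e: "0 < eps" "eps \<le> 1" and kn: "real k / real n < min (eps\<^sup>2 / 4) (1 / 100)" and n: "2000 \<le> n"
  defines "a \<equiv> min (eps\<^sup>2 / 4) (1 / 100)"
  defines "D \<equiv> 335/1000 * eps - a * (1 - ln a)"
  shows "measure_pmf.prob (dla n (nat \<lfloor>eps / 4 * real (n choose (k + 1))\<rfloor>)) {C. \<exists>v \<in> level n k. eps \<le> Phi n C v}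
     \<le> 2 ^ n / 64 powr (real n / 4 - 65) + exp (- D * real n)"
proof -
  define B where "B = real (n choose (k + 1))"
  define T where "T = nat \<lfloor>eps / 4 * B\<rfloor>"
  define h where "h = n div 3"
  define m where "m = h - k - 1"
  define lam where "lam = 3/4 * real (n - k)"
  define r where "r = (real k + 2) / (real n - real k - 1)"
  have n0: "0 < real n" using n by simp
  have nr: "2000 \<le> real n" using n by simp
  have a0: "0 < a" "a \<le> 1/100" using e by (auto simp: a_def)
  have "real k / real n < a" using kn by (simp add: a_def)
  hence ka: "real k < a * real n" using n0 by (simp add: pos_divide_less_eq)
  have "a * real n \<le> 1/100 * real n" using a0 n0 by (intro mult_right_mono) auto
  hence k100: "real k < real n / 100" using ka by simp
  have hk: "k + 2 \<le> h" unfolding h_def using k100 nr by linarith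
  have m1: "1 \<le> m" "k + 1 + m = h" using hk by (auto simp: m_def)
  have h3: "3 * (k + 1 + m) \<le> n" using m1 by (simp add: h_def)
  have kn': "k < n" using k100 by linarith
  have lam0: "0 \<le> lam" by (simp add: lam_def)
  have lamk: "lam / real (n - k) = 3/4"
  proof -
    define x where "x = real (n - k)"
    have "0 < x" using kn' by (simp add: x_def)
    hence "3/4 * x / x = 3/4" by simp
    thus ?thesis by (simp add: lam_def x_def)
  qed
  have Bpos: "0 < B" unfolding B_def using hk h_def n by simp
  have TB: "real T \<le> eps / 4 * B"
  proof -
    have y0: "0 \<le> eps / 4 * B" using e Bpos by simp
    have "real T = real_of_int \<lfloor>eps / 4 * B\<rfloor>" unfolding T_def using y0 by simp
    also have "\<dots> \<le> eps / 4 * B" by (rule of_int_floor_le)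
    finally show ?thesis .
  qed
  have main: "measure_pmf.prob (dla n T) {C. \<exists>v \<in> level n k. eps \<le> Phi n C v}
    \<le> fm B m T + real (n choose k) * exp (lam * exp (3/4) * (1 + 2 * r) / B * real T - lam * eps)"
    using main_bound[OF m1(1) h3 lam0, of T eps] unfolding B_def[symmetric] r_def[symmetric] lamk .
  have "fm B m T \<le> B ^ (m + 1) / (fact (m + 1) * B ^ m)"
    unfolding fm_def
  proof (rule divide_right_mono)
    have "eps / 4 * B \<le> 1 * B" using e Bpos by (intro mult_right_mono) auto
    hence "real T \<le> B" using TB by simp
    thus "real T ^ (m + 1) \<le> B ^ (m + 1)" by (intro power_mono) auto
  qed (use Bpos in auto)
  also have "\<dots> = B / fact (m + 1)"
  proof -
    have "B ^ (m + 1) = B * B ^ m" by simp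
    moreover have "B ^ m \<noteq> 0" using Bpos by simp
    ultimately show ?thesis using mult_divide_mult_cancel_right[of "B ^ m" B "fact (m + 1)"] by simp
  qed
  also have "\<dots> \<le> 2 ^ n / fact (m + 1)"
  proof -
    have "real (n choose (k + 1)) \<le> real ((2::nat) ^ n)" by (rule of_nat_mono[OF binomial_le_pow2])
    hence "B \<le> 2 ^ n" unfolding B_def by simp
    thus ?thesis by (intro divide_right_mono) auto
  qed
  also have "\<dots> \<le> 2 ^ n / fact (n div 4)"
  proof (rule divide_left_mono)
    have "n div 4 \<le> m + 1" unfolding m_def h_def using k100 n hk h_def by linarith
    thus "(fact (n div 4) :: real) \<le> fact (m + 1)" by (rule fact_mono)
  qed auto
  also have "\<dots> \<le> 2 ^ n / 64 powr (real n / 4 - 65)"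
    by (rule divide_left_mono[OF fact_ge_powr]) auto
  finally have t1: "fm B m T \<le> 2 ^ n / 64 powr (real n / 4 - 65)" .
  have "0 < real n - real k - 1" using k100 nr by linarith
  hence r0: "0 \<le> r" unfolding r_def by simp
  have r1: "r \<le> 115/10000"
  proof -
    have den: "0 < real n - real k - 1" using k100 nr by linarith
    have "real k + 2 \<le> 115/10000 * real n - 115/10000 * real k - 115/10000" using k100 nr by linarith
    hence "real k + 2 \<le> 115/10000 * (real n - real k - 1)" by (simp add: algebra_simps)
    thus ?thesis unfolding r_def using den by (simp add: field_simps)
  qed
  have c0: "1 - 214/100 * (1 + 2 * (115/10000)) / 4 \<le> 1 - exp (3/4) * (1 + 2 * r) / 4"
  proof -
    have "exp (3/4) * (1 + 2 * r) \<le> 214/100 * (1 + 2 * (115/10000))"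
      using exp34 r0 r1 by (intro mult_mono) auto
    hence "exp (3/4) * (1 + 2 * r) / 4 \<le> 214/100 * (1 + 2 * (115/10000)) / 4" by (rule divide_right_mono) simp
    thus ?thesis by (rule diff_left_mono)
  qed
  have "lam * exp (3/4) * (1 + 2 * r) / B * real T \<le> lam * exp (3/4) * (1 + 2 * r) / B * (eps / 4 * B)"
    using TB lam0 r0 Bpos by (intro mult_left_mono) auto
  also have "\<dots> = lam * eps * (exp (3/4) * (1 + 2 * r) / 4)" using Bpos by (simp add: field_simps)
  finally have ex1: "lam * exp (3/4) * (1 + 2 * r) / B * real T - lam * eps \<le> - (lam * eps * (1 - exp (3/4) * (1 + 2 * r) / 4))"
    by (simp add: algebra_simps)
  have "335/1000 * eps * real n \<le> lam * eps * (1 - exp (3/4) * (1 + 2 * r) / 4)"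
  proof -
    have l: "3/4 * (99/100 * real n) \<le> lam" unfolding lam_def using k100 kn' by (simp add: of_nat_diff)
    have "335/1000 * eps * real n \<le> (3/4 * (99/100 * real n)) * eps * (1 - 214/100 * (1 + 2 * (115/10000)) / 4)"
      using e n0 by (simp add: algebra_simps)
    also have "\<dots> \<le> lam * eps * (1 - exp (3/4) * (1 + 2 * r) / 4)"
      using l c0 e n0 by (intro mult_mono) auto
    finally show ?thesis .
  qed
  with ex1 have ex2: "lam * exp (3/4) * (1 + 2 * r) / B * real T - lam * eps \<le> - (335/1000 * eps * real n)" by linarith
  have bk: "real (n choose k) \<le> exp (real n * (a * (1 - ln a)))"
    by (rule binom_exp_bound2) (use ka a0 n in auto)
  have "real (n choose k) * exp (lam * exp (3/4) * (1 + 2 * r) / B * real T - lam * eps)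
      \<le> exp (real n * (a * (1 - ln a))) * exp (- (335/1000 * eps * real n))"
    using bk ex2 by (intro mult_mono) auto
  also have "\<dots> = exp (- D * real n)" unfolding D_def by (simp add: exp_add[symmetric] algebra_simps)
  finally have t2: "real (n choose k) * exp (lam * exp (3/4) * (1 + 2 * r) / B * real T - lam * eps) \<le> exp (- D * real n)" .
  show ?thesis using main t1 t2 unfolding T_def B_def by linarith
qed



lemma xexp_lim:
  fixes c :: real assumes c: "0 < c"
  shows "(\<lambda>n. real n * exp (- c * real n)) \<longlonglongrightarrow> 0"
proof -
  have g: "filterlim (\<lambda>n. c * real n) at_top sequentially"
    by (rule filterlim_tendsto_pos_mult_at_top[OF tendsto_const c filterlim_real_sequentially])
  have "(\<lambda>n. (c * real n) ^ 1 / exp (c * real n)) \<longlonglongrightarrow> 0"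
    by (rule filterlim_compose[OF tendsto_power_div_exp_0 g])
  hence "(\<lambda>n. (1 / c) * ((c * real n) ^ 1 / exp (c * real n))) \<longlonglongrightarrow> (1 / c) * 0"
    by (intro tendsto_mult tendsto_const)
  moreover have "(1 / c) * ((c * real n) ^ 1 / exp (c * real n)) = real n * exp (- c * real n)" for n
    using c by (simp add: exp_minus field_simps)
  ultimately show ?thesis by simp
qed

lemma U_lim:
  fixes D :: real assumes D: "0 < D"
  shows "(\<lambda>n. real n * (2 ^ n / 64 powr (real n / 4 - 65) + exp (- D * real n))) \<longlonglongrightarrow> 0"
proof -
  define c where "c = ln 2 / (2::real)"
  have c: "0 < c" by (simp add: c_def)
  have eq: "2 ^ n / 64 powr (real n / 4 - 65) = 2 powr 390 * exp (- c * real n)" for n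
  proof -
    have s: "(2::real) powr 6 = 64" using powr_realpow[of "2::real" 6] by simp
    have "(64::real) powr (real n / 4 - 65) = (2 powr 6) powr (real n / 4 - 65)" by (simp only: s)
    also have "\<dots> = 2 powr (6 * (real n / 4 - 65))" by (rule powr_powr)
    finally have a: "(64::real) powr (real n / 4 - 65) = 2 powr (6 * (real n / 4 - 65))" .
    have b: "(2::real) ^ n = 2 powr real n" by (simp add: powr_realpow)
    have "2 powr real n / 2 powr (6 * (real n / 4 - 65)) = (2::real) powr (real n - 6 * (real n / 4 - 65))"
      by (rule powr_diff[symmetric])
    also have "real n - 6 * (real n / 4 - 65) = 390 + (- (real n / 2))" by simp
    also have "(2::real) powr (390 + (- (real n / 2))) = 2 powr 390 * 2 powr (- (real n / 2))" by (rule powr_add)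
    also have "(2::real) powr (- (real n / 2)) = exp (- c * real n)" by (simp add: powr_def c_def)
    finally show ?thesis using a b by simp
  qed
  have "(\<lambda>n. 2 powr 390 * (real n * exp (- c * real n)) + real n * exp (- D * real n)) \<longlonglongrightarrow> 2 powr 390 * 0 + 0"
    by (intro tendsto_add tendsto_mult tendsto_const xexp_lim c D)
  moreover have "real n * (2 ^ n / 64 powr (real n / 4 - 65) + exp (- D * real n))
      = 2 powr 390 * (real n * exp (- c * real n)) + real n * exp (- D * real n)" for n
    unfolding eq by (simp add: algebra_simps)
  ultimately show ?thesis by simp
qed

theorem mainTheorem7:
  fixes \<epsilon> :: real and k :: "nat \<Rightarrow> nat"
  assumes "\<epsilon> > 0"
    and "\<forall>n. real (k n) / real n < min (\<epsilon>\<^sup>2 / 4) (1 / 100)"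
  shows "(\<lambda>n. measure_pmf.prob (dla n (nat \<lfloor>\<epsilon> / 4 * real (n choose (k n + 1))\<rfloor>))
              {C. \<exists>v \<in> level n (k n). Phi n C v \<ge> \<epsilon>})
         \<in> o(\<lambda>n. 1 / real n)"
proof -
  define P where "P = (\<lambda>n. measure_pmf.prob (dla n (nat \<lfloor>\<epsilon> / 4 * real (n choose (k n + 1))\<rfloor>))
              {C. \<exists>v \<in> level n (k n). Phi n C v \<ge> \<epsilon>})"
  have P0: "0 \<le> P n" for n by (simp add: P_def)
  have lim: "(\<lambda>n. P n * real n) \<longlonglongrightarrow> 0"
  proof (cases "\<epsilon> \<le> 1")
    case True
    define a where "a = min (\<epsilon>\<^sup>2 / 4) (1 / 100)"
    define D where "D = 335/1000 * \<epsilon> - a * (1 - ln a)"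
    have D: "0 < D" unfolding D_def a_def using gap[OF assms(1) True] by simp
    show ?thesis
    proof (rule tendsto_sandwich[OF _ _ tendsto_const U_lim[OF D]])
      show "\<forall>\<^sub>F n in sequentially. 0 \<le> P n * real n" using P0 by simp
      show "\<forall>\<^sub>F n in sequentially. P n * real n \<le> real n * (2 ^ n / 64 powr (real n / 4 - 65) + exp (- D * real n))"
      proof (rule eventually_sequentiallyI[of 2000])
        fix n :: nat assume n: "2000 \<le> n"
        have "P n \<le> 2 ^ n / 64 powr (real n / 4 - 65) + exp (- D * real n)"
          unfolding P_def D_def a_def by (rule per_n_bound[OF assms(1) True spec[OF assms(2)] n])
        thus "P n * real n \<le> real n * (2 ^ n / 64 powr (real n / 4 - 65) + exp (- D * real n))"
          by (simp add: mult.commute mult_left_mono)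
      qed
    qed
  next
    case False
    have "P n = 0" for n
    proof -
      have "\<not> (\<epsilon> \<le> Phi n C v)" if "v \<in> level n (k n)" for C v
      proof -
        have "v \<subseteq> {0..<n}" using that by (simp add: level_def)
        hence "Phi n C v \<le> 1" by (rule Phi_le_1)
        thus ?thesis using False by simp
      qed
      hence "{C. \<exists>v \<in> level n (k n). Phi n C v \<ge> \<epsilon>} = {}" by blast
      thus ?thesis by (simp add: P_def)
    qed
    thus ?thesis by simp
  qed
  have "P \<in> o(\<lambda>n. 1 / real n)"
  proof (rule smalloI_tendsto)
    show "((\<lambda>n. P n / (1 / real n)) \<longlongrightarrow> 0) at_top" using lim by simp
    show "\<forall>\<^sub>F n in at_top. 1 / real n \<noteq> 0" by (rule eventually_sequentiallyI[of 1]) simp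
  qed
  thus ?thesis unfolding P_def .
qed

end
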